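(* Fix a positive integer $n$. For a prime power $q$, let $p_r(q,n)$ denote the probability that a uniformly random differential on ${\mathbb F}_q^n$ has $r$-dimensional homology. Then for every $r>1$ with $r\equiv n \pmod 2$, $\lim_{q\to\infty} p_r(q,n)=0$. Moreover, $\lim_{q\to\infty}p_0(q,n)=1$ if $n$ is even, and $\lim_{q\to\infty}p_1(q,n)=1$ if $n$ is odd. (Here $q$ ranges over prime powers.) *)

theory Defs
  imports "HOL-Algebra.Ring" "HOL-Algebra.Ring_Divisibility"
begin

definition vecs :: "('a, 'b) ring_scheme \<Rightarrow> nat \<Rightarrow> (nat \<Rightarrow> 'a) set" where
  "vecs R n = {v. (\<forall>i<n. v i \<in> carrier R) \<and> (\<forall>i\<ge>n. v i = \<zero>\<^bsub>R\<^esub>)}"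

definition zvec :: "('a, 'b) ring_scheme \<Rightarrow> nat \<Rightarrow> 'a" where
  "zvec R = (\<lambda>i. \<zero>\<^bsub>R\<^esub>)"

definition mats :: "('a, 'b) ring_scheme \<Rightarrow> nat \<Rightarrow> (nat \<Rightarrow> nat \<Rightarrow> 'a) set" where
  "mats R n = {M. (\<forall>i j. (i < n \<and> j < n \<longrightarrow> M i j \<in> carrier R)
                    \<and> (\<not> (i < n \<and> j < n) \<longrightarrow> M i j = \<zero>\<^bsub>R\<^esub>))}"

definition mat_vec :: "('a, 'b) ring_scheme \<Rightarrow> nat \<Rightarrow> (nat \<Rightarrow> nat \<Rightarrow> 'a) \<Rightarrow> (nat \<Rightarrow> 'a) \<Rightarrow> (nat \<Rightarrow> 'a)" where
  "mat_vec R n M v = (\<lambda>i. if i < n then finsum R (\<lambda>k. M i k \<otimes>\<^bsub>R\<^esub> v k) {..<n} else \<zero>\<^bsub>R\<^esub>)"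

definition mat_mult :: "('a, 'b) ring_scheme \<Rightarrow> nat \<Rightarrow> (nat \<Rightarrow> nat \<Rightarrow> 'a) \<Rightarrow> (nat \<Rightarrow> nat \<Rightarrow> 'a) \<Rightarrow> (nat \<Rightarrow> nat \<Rightarrow> 'a)" where
  "mat_mult R n M N = (\<lambda>i j. if i < n \<and> j < n
      then finsum R (\<lambda>k. M i k \<otimes>\<^bsub>R\<^esub> N k j) {..<n} else \<zero>\<^bsub>R\<^esub>)"

definition differentials :: "('a, 'b) ring_scheme \<Rightarrow> nat \<Rightarrow> (nat \<Rightarrow> nat \<Rightarrow> 'a) set" where
  "differentials R n = {M \<in> mats R n. mat_mult R n M M = (\<lambda>i j. \<zero>\<^bsub>R\<^esub>)}"

definition lin_indep :: "('a, 'b) ring_scheme \<Rightarrow> nat \<Rightarrow> (nat \<Rightarrow> 'a) list \<Rightarrow> bool" where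
  "lin_indep R n vs \<longleftrightarrow>
     (\<forall>c. (\<forall>k < length vs. c k \<in> carrier R) \<longrightarrow>
          (\<lambda>i. finsum R (\<lambda>k. c k \<otimes>\<^bsub>R\<^esub> (vs ! k) i) {..<length vs}) = zvec R
          \<longrightarrow> (\<forall>k < length vs. c k = \<zero>\<^bsub>R\<^esub>))"

definition subdim :: "('a, 'b) ring_scheme \<Rightarrow> nat \<Rightarrow> (nat \<Rightarrow> 'a) set \<Rightarrow> nat" where
  "subdim R n W = Max {k. \<exists>vs. length vs = k \<and> set vs \<subseteq> W \<and> lin_indep R n vs}"

definition ker_d :: "('a, 'b) ring_scheme \<Rightarrow> nat \<Rightarrow> (nat \<Rightarrow> nat \<Rightarrow> 'a) \<Rightarrow> (nat \<Rightarrow> 'a) set" where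
  "ker_d R n M = {v \<in> vecs R n. mat_vec R n M v = zvec R}"

definition im_d :: "('a, 'b) ring_scheme \<Rightarrow> nat \<Rightarrow> (nat \<Rightarrow> nat \<Rightarrow> 'a) \<Rightarrow> (nat \<Rightarrow> 'a) set" where
  "im_d R n M = mat_vec R n M ` vecs R n"

definition homology_dim :: "('a, 'b) ring_scheme \<Rightarrow> nat \<Rightarrow> (nat \<Rightarrow> nat \<Rightarrow> 'a) \<Rightarrow> nat" where
  "homology_dim R n M = subdim R n (ker_d R n M) - subdim R n (im_d R n M)"

definition prob_hom :: "('a, 'b) ring_scheme \<Rightarrow> nat \<Rightarrow> nat \<Rightarrow> real" where
  "prob_hom R n r = real (card {M \<in> differentials R n. homology_dim R n M = r})
                    / real (card (differentials R n))"

end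

theory Submission
  imports Defs
begin

definition lincomb :: "('a, 'b) ring_scheme \<Rightarrow> (nat \<Rightarrow> 'a) \<Rightarrow> (nat \<Rightarrow> 'a) list \<Rightarrow> (nat \<Rightarrow> 'a)" where
  "lincomb R c vs = (\<lambda>i. finsum R (\<lambda>k. c k \<otimes>\<^bsub>R\<^esub> (vs ! k) i) {..<length vs})"

definition span :: "('a, 'b) ring_scheme \<Rightarrow> (nat \<Rightarrow> 'a) list \<Rightarrow> (nat \<Rightarrow> 'a) set" where
  "span R vs = (\<lambda>cs. lincomb R (nth cs) vs) ` {cs. set cs \<subseteq> carrier R \<and> length cs = length vs}"

definition subsp :: "('a, 'b) ring_scheme \<Rightarrow> nat \<Rightarrow> (nat \<Rightarrow> 'a) set \<Rightarrow> bool" where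
  "subsp R n W \<longleftrightarrow> W \<subseteq> vecs R n \<and> (\<forall>vs c. set vs \<subseteq> W \<and> (\<forall>k<length vs. c k \<in> carrier R) \<longrightarrow> lincomb R c vs \<in> W)"

lemma (in cring) finsum_swap:
  assumes "finite A" "finite B" "\<And>i j. i \<in> A \<Longrightarrow> j \<in> B \<Longrightarrow> f i j \<in> carrier R"
  shows "(\<Oplus>i\<in>A. \<Oplus>j\<in>B. f i j) = (\<Oplus>j\<in>B. \<Oplus>i\<in>A. f i j)"
  using assms
proof (induction A rule: finite_induct)
  case empty
  then show ?case by (simp add: finsum_zero)
next
  case (insert a A)
  have "(\<Oplus>i\<in>insert a A. \<Oplus>j\<in>B. f i j) = (\<Oplus>j\<in>B. f a j) \<oplus> (\<Oplus>i\<in>A. \<Oplus>j\<in>B. f i j)"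
    using insert by (subst finsum_insert) (auto intro!: finsum_closed)
  also have "\<dots> = (\<Oplus>j\<in>B. f a j) \<oplus> (\<Oplus>j\<in>B. \<Oplus>i\<in>A. f i j)"
    using insert by simp
  also have "\<dots> = (\<Oplus>j\<in>B. f a j \<oplus> (\<Oplus>i\<in>A. f i j))"
    using insert by (subst finsum_addf) (auto intro!: finsum_closed)
  also have "\<dots> = (\<Oplus>j\<in>B. \<Oplus>i\<in>insert a A. f i j)"
    using insert by (intro finsum_cong) (auto intro!: finsum_closed simp: finsum_insert)
  finally show ?case .
qed

lemma (in cring) finsum_neg:
  assumes "finite A" "\<And>i. i \<in> A \<Longrightarrow> f i \<in> carrier R"
  shows "(\<Oplus>i\<in>A. \<ominus> f i) = \<ominus> (\<Oplus>i\<in>A. f i)"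
  using assms
proof (induction A rule: finite_induct)
  case empty
  then show ?case by (simp add: finsum_zero)
next
  case (insert a A)
  then show ?case
    by (simp add: finsum_insert Pi_def finsum_closed minus_add)
qed


locale ffield = field R for R :: "('a, 'b) ring_scheme" (structure) +
  fixes n :: nat
  assumes finR: "finite (carrier R)"
begin

abbreviation q where "q \<equiv> card (carrier R)"

lemma q_ge2: "q \<ge> 2"
proof -
  have "{\<zero>, \<one>} \<subseteq> carrier R" by auto
  then have "card {\<zero>, \<one>} \<le> q" using finR by (rule card_mono[rotated])
  then show ?thesis by simp
qed

lemma vecsD: "v \<in> vecs R n \<Longrightarrow> i < n \<Longrightarrow> v i \<in> carrier R"
  "v \<in> vecs R n \<Longrightarrow> \<not> i < n \<Longrightarrow> v i = \<zero>"
  by (auto simp: vecs_def)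

lemma vecs_carrier: "v \<in> vecs R n \<Longrightarrow> v i \<in> carrier R"
  by (cases "i < n") (auto simp: vecs_def)

lemma nth_vecs: "set vs \<subseteq> vecs R n \<Longrightarrow> k < length vs \<Longrightarrow> vs ! k \<in> vecs R n"
  by auto

lemma nth_vecs_carrier[simp]: "set vs \<subseteq> vecs R n \<Longrightarrow> k < length vs \<Longrightarrow> (vs ! k) i \<in> carrier R"
  using nth_vecs vecs_carrier by blast

lemma set_sub_nth: "set cs \<subseteq> A \<Longrightarrow> k < length cs \<Longrightarrow> cs ! k \<in> A"
  by auto

lemma set_sub_nth': "set cs \<subseteq> A \<Longrightarrow> length cs = m \<Longrightarrow> k < m \<Longrightarrow> cs ! k \<in> A"
  by auto

lemma lincomb_vecs:
  assumes "set vs \<subseteq> vecs R n" "\<And>k. k < length vs \<Longrightarrow> c k \<in> carrier R"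
  shows "lincomb R c vs \<in> vecs R n"
proof -
  have "lincomb R c vs i \<in> carrier R" for i
    unfolding lincomb_def using assms by (auto intro!: finsum_closed)
  moreover have "lincomb R c vs i = \<zero>" if "\<not> i < n" for i
  proof -
    have "lincomb R c vs i = (\<Oplus>k\<in>{..<length vs}. \<zero>)"
      unfolding lincomb_def using assms that
      by (intro finsum_cong) (auto simp: vecsD(2)[OF nth_vecs])
    then show ?thesis by (simp add: finsum_zero)
  qed
  ultimately show ?thesis unfolding vecs_def by (simp add: not_less[symmetric] del: nth_vecs_carrier)
qed

lemma lincomb_carrier[simp]:
  assumes "set vs \<subseteq> vecs R n" "\<And>k. k < length vs \<Longrightarrow> c k \<in> carrier R"
  shows "lincomb R c vs i \<in> carrier R"
  by (rule vecs_carrier, rule lincomb_vecs) (use assms in auto)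

lemma lincomb_cong:
  assumes "set vs \<subseteq> vecs R n" "\<And>k. k < length vs \<Longrightarrow> c k \<in> carrier R"
    "\<And>k. k < length vs \<Longrightarrow> c k = c' k"
  shows "lincomb R c vs = lincomb R c' vs"
  unfolding lincomb_def using assms by (intro ext finsum_cong) auto

lemma span_mem:
  assumes "set vs \<subseteq> vecs R n" "\<And>k. k < length vs \<Longrightarrow> c k \<in> carrier R"
  shows "lincomb R c vs \<in> span R vs"
proof -
  let ?cs = "map c [0..<length vs]"
  have "lincomb R (nth ?cs) vs = lincomb R c vs"
    using assms by (intro lincomb_cong) auto
  moreover have "set ?cs \<subseteq> carrier R \<and> length ?cs = length vs" using assms by auto
  ultimately show ?thesis unfolding span_def by (intro image_eqI[where x="?cs"]) auto
qed

lemma span_iff: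
  assumes "set vs \<subseteq> vecs R n"
  shows "v \<in> span R vs \<longleftrightarrow> (\<exists>c. (\<forall>k<length vs. c k \<in> carrier R) \<and> v = lincomb R c vs)"
proof
  assume "v \<in> span R vs"
  then obtain cs where "set cs \<subseteq> carrier R" "length cs = length vs" "v = lincomb R (nth cs) vs"
    unfolding span_def by auto
  then show "\<exists>c. (\<forall>k<length vs. c k \<in> carrier R) \<and> v = lincomb R c vs"
    by (intro exI[of _ "nth cs"]) auto
next
  assume "\<exists>c. (\<forall>k<length vs. c k \<in> carrier R) \<and> v = lincomb R c vs"
  then show "v \<in> span R vs" using span_mem[OF assms] by auto
qed

lemma span_vecs: assumes "set vs \<subseteq> vecs R n" shows "span R vs \<subseteq> vecs R n"
proof
  fix v assume "v \<in> span R vs"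
  then obtain c where "\<forall>k<length vs. c k \<in> carrier R" "v = lincomb R c vs"
    using span_iff[OF assms] by auto
  then show "v \<in> vecs R n" using assms by (simp add: lincomb_vecs)
qed

lemma span_finite: "finite (span R vs)"
  unfolding span_def using finR by (intro finite_imageI finite_lists_length_eq) 

lemma span_card_le: "card (span R vs) \<le> q ^ length vs"
proof -
  have "card (span R vs) \<le> card {cs. set cs \<subseteq> carrier R \<and> length cs = length vs}"
    unfolding span_def using finR by (intro card_image_le finite_lists_length_eq)
  also have "\<dots> = q ^ length vs" using finR by (rule card_lists_length_eq)
  finally show ?thesis .
qed

lemma lincomb_diff:
  assumes "set vs \<subseteq> vecs R n" "\<And>k. k < length vs \<Longrightarrow> c k \<in> carrier R"
    "\<And>k. k < length vs \<Longrightarrow> c' k \<in> carrier R"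
  shows "lincomb R (\<lambda>k. c k \<ominus> c' k) vs i = lincomb R c vs i \<ominus> lincomb R c' vs i"
proof -
  have "lincomb R (\<lambda>k. c k \<ominus> c' k) vs i =
     (\<Oplus>k\<in>{..<length vs}. c k \<otimes> (vs!k) i \<oplus> \<ominus> (c' k \<otimes> (vs!k) i))"
    unfolding lincomb_def using assms
    by (intro finsum_cong) (auto simp: minus_eq l_distr l_minus)
  also have "\<dots> = lincomb R c vs i \<oplus> (\<Oplus>k\<in>{..<length vs}. \<ominus> (c' k \<otimes> (vs!k) i))"
    unfolding lincomb_def using assms by (subst finsum_addf) auto
  also have "\<dots> = lincomb R c vs i \<ominus> lincomb R c' vs i"
    unfolding lincomb_def using assms by (subst finsum_neg) (auto simp: minus_eq)
  finally show ?thesis .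
qed

lemma indepD:
  assumes "lin_indep R n vs" "\<And>k. k < length vs \<Longrightarrow> c k \<in> carrier R"
    "lincomb R c vs = zvec R" "k < length vs"
  shows "c k = \<zero>"
  using assms unfolding lin_indep_def lincomb_def by blast

lemma lincomb_inj:
  assumes "lin_indep R n vs" "set vs \<subseteq> vecs R n"
    "\<And>k. k < length vs \<Longrightarrow> c k \<in> carrier R"
    "\<And>k. k < length vs \<Longrightarrow> c' k \<in> carrier R"
    "lincomb R c vs = lincomb R c' vs" "k < length vs"
  shows "c k = c' k"
proof -
  have cd: "\<And>j. j < length vs \<Longrightarrow> c j \<ominus> c' j \<in> carrier R" using assms(3,4) by simp
  have z: "lincomb R (\<lambda>k. c k \<ominus> c' k) vs = zvec R"
  proof (rule ext)
    fix i
    have "lincomb R (\<lambda>k. c k \<ominus> c' k) vs i = lincomb R c vs i \<ominus> lincomb R c' vs i"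
      by (rule lincomb_diff) (use assms in auto)
    also have "\<dots> = \<zero>" using assms(5) lincomb_carrier[OF assms(2)] assms(4)
      by (simp add: r_right_minus_eq)
    finally show "lincomb R (\<lambda>k. c k \<ominus> c' k) vs i = zvec R i" by (simp add: zvec_def)
  qed
  have "c k \<ominus> c' k = \<zero>"
    using indepD[of vs "\<lambda>k. c k \<ominus> c' k" k] assms(1,6) cd z by blast
  then show ?thesis using assms by (metis r_right_minus_eq)
qed

lemma span_card_indep:
  assumes "lin_indep R n vs" "set vs \<subseteq> vecs R n"
  shows "card (span R vs) = q ^ length vs"
proof -
  have "inj_on (\<lambda>cs. lincomb R (nth cs) vs) {cs. set cs \<subseteq> carrier R \<and> length cs = length vs}"
  proof (rule inj_onI)
    fix cs cs' assume cs: "cs \<in> {cs. set cs \<subseteq> carrier R \<and> length cs = length vs}"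
      and cs': "cs' \<in> {cs. set cs \<subseteq> carrier R \<and> length cs = length vs}"
      and eq: "lincomb R (nth cs) vs = lincomb R (nth cs') vs"
    show "cs = cs'"
    proof (rule nth_equalityI)
      show "length cs = length cs'" using cs cs' by simp
      fix k assume "k < length cs"
      have "\<And>k. k < length vs \<Longrightarrow> cs!k \<in> carrier R" "\<And>k. k < length vs \<Longrightarrow> cs'!k \<in> carrier R"
        using cs cs' set_sub_nth'[of cs "carrier R" "length vs"] set_sub_nth'[of cs' "carrier R" "length vs"] by auto
      with \<open>k < length cs\<close> show "cs ! k = cs' ! k"
        using lincomb_inj[OF assms, of "nth cs" "nth cs'" k] cs cs' eq by (auto intro: set_sub_nth)
    qed
  qed
  then have "card (span R vs) = card {cs. set cs \<subseteq> carrier R \<and> length cs = length vs}"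
    unfolding span_def by (rule card_image)
  also have "\<dots> = q ^ length vs" using finR by (rule card_lists_length_eq)
  finally show ?thesis .
qed

end


context ffield begin

definition Uk :: "nat \<Rightarrow> (nat \<Rightarrow> 'a) set" where
  "Uk k = {v \<in> vecs R n. \<forall>j<k. v j = \<zero>}"

lemma Uk_card: "finite (Uk k) \<and> card (Uk k) = q ^ (n - k)"
proof -
  let ?P = "PiE {k..<n} (\<lambda>_. carrier R)"
  let ?f = "\<lambda>v. restrict v {k..<n}"
  have inj: "inj_on ?f (Uk k)"
  proof (rule inj_onI)
    fix v w assume v: "v \<in> Uk k" and w: "w \<in> Uk k" and eq: "?f v = ?f w"
    show "v = w"
    proof (rule ext)
      fix i
      show "v i = w i"
      proof (cases "i \<in> {k..<n}")
        case True then show ?thesis using fun_cong[OF eq, of i] by simp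
      next
        case False
        then have "i < k \<or> \<not> i < n" by auto
        then show ?thesis using v w unfolding Uk_def vecs_def by auto
      qed
    qed
  qed
  have img: "?f ` Uk k = ?P"
  proof
    show "?f ` Uk k \<subseteq> ?P"
    proof
      fix g assume "g \<in> ?f ` Uk k"
      then obtain v where v: "v \<in> Uk k" "g = ?f v" by auto
      have "v i \<in> carrier R" if "i \<in> {k..<n}" for i using v(1) that unfolding Uk_def vecs_def by auto
      then show "g \<in> ?P" using v(2) by auto
    qed
  next
    show "?P \<subseteq> ?f ` Uk k"
    proof
      fix g assume g: "g \<in> ?P"
      let ?v = "\<lambda>i. if i \<in> {k..<n} then g i else \<zero>"
      have v1: "?v \<in> Uk k" using g unfolding Uk_def vecs_def by (auto simp: PiE_def Pi_def)
      have v2: "?f ?v = g"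
      proof (rule ext)
        fix i show "?f ?v i = g i"
          using g PiE_arb[OF g, of i] by (cases "i \<in> {k..<n}") simp_all
      qed
      show "g \<in> ?f ` Uk k" by (rule image_eqI[where f="?f" and x="?v", OF v2[symmetric] v1])
    qed
  qed
  have fP: "finite ?P" using finR by (intro finite_PiE) auto
  have "card (Uk k) = card ?P" using inj img by (metis card_image)
  also have "\<dots> = q ^ (n - k)" by (simp add: card_PiE)
  finally have c: "card (Uk k) = q ^ (n - k)" .
  have "finite (Uk k)" using inj img fP by (metis finite_imageD)
  with c show ?thesis by simp
qed

lemma Uk0: "Uk 0 = vecs R n" by (simp add: Uk_def)

lemma vecs_card: "finite (vecs R n)" "card (vecs R n) = q ^ n"
  using Uk_card[of 0] by (simp_all add: Uk0)

lemma pow_le_exp: assumes "q ^ a \<le> q ^ b" shows "a \<le> b"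
proof -
  have "1 < q" using q_ge2 by simp
  then show ?thesis using power_le_imp_le_exp[of q a b] assms by blast
qed

lemma pow_eq_exp: "q ^ a = q ^ b \<Longrightarrow> a = b"
  using pow_le_exp by (metis order_antisym order_refl)

lemma indep_len_le:
  assumes "lin_indep R n vs" "set vs \<subseteq> vecs R n"
  shows "length vs \<le> n"
proof -
  have "q ^ length vs = card (span R vs)" using span_card_indep[OF assms] by simp
  also have "\<dots> \<le> card (vecs R n)" using span_vecs[OF assms(2)] vecs_card(1) by (rule card_mono[rotated])
  also have "\<dots> = q ^ n" by (rule vecs_card(2))
  finally show ?thesis by (rule pow_le_exp)
qed

lemma lincomb_nil: "lincomb R c [] = zvec R"
  by (simp add: lincomb_def zvec_def finsum_empty)

lemma lincomb_snoc:
  assumes "set vs \<subseteq> vecs R n" "v \<in> vecs R n" "\<And>k. k \<le> length vs \<Longrightarrow> c k \<in> carrier R"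
  shows "lincomb R c (vs @ [v]) i = lincomb R c vs i \<oplus> c (length vs) \<otimes> v i"
proof -
  have "lincomb R c (vs @ [v]) i = (\<Oplus>k\<in>insert (length vs) {..<length vs}. c k \<otimes> ((vs @ [v]) ! k) i)"
    unfolding lincomb_def by (simp add: lessThan_Suc)
  also have "\<dots> = c (length vs) \<otimes> v i \<oplus> (\<Oplus>k\<in>{..<length vs}. c k \<otimes> ((vs @ [v]) ! k) i)"
    using assms by (subst finsum_insert) (auto simp: nth_append vecs_carrier)
  also have "(\<Oplus>k\<in>{..<length vs}. c k \<otimes> ((vs @ [v]) ! k) i) = lincomb R c vs i"
    unfolding lincomb_def using assms by (intro finsum_cong) (auto simp: nth_append)
  finally show ?thesis using assms by (simp add: a_comm vecs_carrier)
qed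

lemma lincomb_smult:
  assumes "set vs \<subseteq> vecs R n" "\<And>k. k < length vs \<Longrightarrow> c k \<in> carrier R" "a \<in> carrier R"
  shows "lincomb R (\<lambda>k. a \<otimes> c k) vs i = a \<otimes> lincomb R c vs i"
proof -
  have "a \<otimes> lincomb R c vs i = (\<Oplus>k\<in>{..<length vs}. a \<otimes> (c k \<otimes> (vs ! k) i))"
    unfolding lincomb_def using assms by (subst finsum_rdistr) auto
  also have "\<dots> = lincomb R (\<lambda>k. a \<otimes> c k) vs i"
    unfolding lincomb_def using assms by (intro finsum_cong) (auto simp: m_assoc)
  finally show ?thesis by simp
qed

lemma solve_lin:
  assumes "X \<in> carrier R" "c \<in> carrier R" "y \<in> carrier R" "c \<noteq> \<zero>" "X \<oplus> c \<otimes> y = \<zero>"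
  shows "y = (\<ominus> (inv c)) \<otimes> X"
proof -
  have cu: "c \<in> Units R" using field_Units assms by auto
  have "c \<otimes> y = \<ominus> X" using assms by (metis a_comm m_closed sum_zero_eq_neg)
  then have "inv c \<otimes> (c \<otimes> y) = inv c \<otimes> (\<ominus> X)" by simp
  moreover have "inv c \<otimes> (c \<otimes> y) = y" using cu assms by (simp add: m_assoc[symmetric])
  moreover have "inv c \<otimes> (\<ominus> X) = (\<ominus> (inv c)) \<otimes> X" using cu assms by (simp add: l_minus r_minus)
  ultimately show ?thesis by simp
qed

lemma indep_snoc:
  assumes ind: "lin_indep R n vs" and vs: "set vs \<subseteq> vecs R n" and v: "v \<in> vecs R n"
    and nv: "v \<notin> span R vs"
  shows "lin_indep R n (vs @ [v])"
  unfolding lin_indep_def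
proof (rule allI, rule impI, rule impI)
  fix c
  assume cc: "\<forall>k<length (vs @ [v]). c k \<in> carrier R"
  assume z0: "(\<lambda>i. \<Oplus>k\<in>{..<length (vs @ [v])}. c k \<otimes> ((vs @ [v]) ! k) i) = zvec R"
  let ?L = "length vs"
  have cc': "\<And>k. k \<le> ?L \<Longrightarrow> c k \<in> carrier R" using cc by auto
  have cc'': "\<And>k. k < ?L \<Longrightarrow> c k \<in> carrier R" using cc by auto
  have z: "lincomb R c vs i \<oplus> c ?L \<otimes> v i = \<zero>" for i
  proof -
    have "lincomb R c (vs @ [v]) i = \<zero>" using fun_cong[OF z0, of i] unfolding lincomb_def zvec_def .
    then show ?thesis using lincomb_snoc[OF vs v cc'] by simp
  qed
  have cL: "c ?L = \<zero>"
  proof (rule ccontr)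
    assume ne: "c ?L \<noteq> \<zero>"
    have cLc: "c ?L \<in> carrier R" using cc' by simp
    have icar: "\<ominus> (inv (c ?L)) \<in> carrier R" using ne cLc field_Units by auto
    have "v = lincomb R (\<lambda>k. (\<ominus> (inv (c ?L))) \<otimes> c k) vs"
    proof (rule ext)
      fix i
      have "v i = (\<ominus> (inv (c ?L))) \<otimes> lincomb R c vs i"
        using solve_lin[OF lincomb_carrier[OF vs cc''] cLc vecs_carrier[OF v] ne z] .
      also have "\<dots> = lincomb R (\<lambda>k. (\<ominus> (inv (c ?L))) \<otimes> c k) vs i"
        using lincomb_smult[OF vs cc'' icar] by simp
      finally show "v i = lincomb R (\<lambda>k. (\<ominus> (inv (c ?L))) \<otimes> c k) vs i" .
    qed
    moreover have "lincomb R (\<lambda>k. (\<ominus> (inv (c ?L))) \<otimes> c k) vs \<in> span R vs"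
      using icar cc'' by (intro span_mem[OF vs]) auto
    ultimately show False using nv by simp
  qed
  have zz: "lincomb R c vs = zvec R"
  proof (rule ext)
    fix i
    have "lincomb R c vs i \<oplus> \<zero> = \<zero>" using z[of i] cL vecs_carrier[OF v] by simp
    then show "lincomb R c vs i = zvec R i" using lincomb_carrier[OF vs cc''] by (simp add: zvec_def)
  qed
  show "\<forall>k<length (vs @ [v]). c k = \<zero>"
  proof (intro allI impI)
    fix k assume "k < length (vs @ [v])"
    show "c k = \<zero>"
    proof (cases "k < ?L")
      case True
      then show ?thesis using indepD[of vs c k] ind cc'' zz by blast
    next
      case False
      then have "k = ?L" using \<open>k < length (vs @ [v])\<close> by simp
      then show ?thesis using cL by simp
    qed
  qed
qed

lemma subsp_vecs: "subsp R n W \<Longrightarrow> W \<subseteq> vecs R n" by (simp add: subsp_def)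

lemma subsp_lincomb:
  "subsp R n W \<Longrightarrow> set vs \<subseteq> W \<Longrightarrow> (\<And>k. k < length vs \<Longrightarrow> c k \<in> carrier R) \<Longrightarrow> lincomb R c vs \<in> W"
  unfolding subsp_def by blast

lemma subsp_zero: "subsp R n W \<Longrightarrow> zvec R \<in> W"
  using subsp_lincomb[of W "[]"] by (simp add: lincomb_nil)

lemma subsp_finite: "subsp R n W \<Longrightarrow> finite W"
  using subsp_vecs vecs_card(1) finite_subset by blast

lemma subsp_span:
  assumes "subsp R n W" "set vs \<subseteq> W"
  shows "span R vs \<subseteq> W"
proof
  have vs: "set vs \<subseteq> vecs R n" using assms subsp_vecs by blast
  fix v assume "v \<in> span R vs"
  then obtain c where "\<forall>k<length vs. c k \<in> carrier R" "v = lincomb R c vs"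
    using span_iff[OF vs] by auto
  then show "v \<in> W" using subsp_lincomb[OF assms] by simp
qed

lemma indep_card_le:
  assumes "subsp R n W" "lin_indep R n vs" "set vs \<subseteq> W"
  shows "q ^ length vs \<le> card W"
proof -
  have vs: "set vs \<subseteq> vecs R n" using assms subsp_vecs by blast
  have "q ^ length vs = card (span R vs)" using span_card_indep[OF assms(2) vs] by simp
  also have "\<dots> \<le> card W" using subsp_span[OF assms(1,3)] subsp_finite[OF assms(1)] by (rule card_mono[rotated])
  finally show ?thesis .
qed

lemma extend_basis:
  assumes W: "subsp R n W" and ind: "lin_indep R n bs" and bs: "set bs \<subseteq> W"
  shows "\<exists>cs. set cs \<subseteq> W \<and> lin_indep R n (bs @ cs) \<and> span R (bs @ cs) = W"
proof -
  have Wv: "W \<subseteq> vecs R n" using W subsp_vecs by blast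
  define P where "P k \<longleftrightarrow> (\<exists>cs. length cs = k \<and> set cs \<subseteq> W \<and> lin_indep R n (bs @ cs))" for k
  have P0: "P 0" unfolding P_def using ind by (intro exI[of _ "[]"]) simp
  have Pb: "\<forall>k. P k \<longrightarrow> k \<le> n"
  proof (intro allI impI)
    fix k assume "P k"
    then obtain cs where "length cs = k" "set cs \<subseteq> W" "lin_indep R n (bs @ cs)" unfolding P_def by blast
    moreover have "set (bs @ cs) \<subseteq> vecs R n" using bs Wv \<open>set cs \<subseteq> W\<close> by auto
    ultimately show "k \<le> n" using indep_len_le[of "bs @ cs"] by simp
  qed
  obtain k where Pk: "P k" and kmax: "\<forall>y. P y \<longrightarrow> y \<le> k"
    using Nat.ex_has_greatest_nat[OF P0 Pb] by blast
  then obtain cs where cs: "length cs = k" "set cs \<subseteq> W" "lin_indep R n (bs @ cs)" unfolding P_def by blast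
  have bc: "set (bs @ cs) \<subseteq> W" using bs cs by auto
  have "span R (bs @ cs) = W"
  proof
    show "span R (bs @ cs) \<subseteq> W" by (rule subsp_span[OF W bc])
    show "W \<subseteq> span R (bs @ cs)"
    proof
      fix w assume w: "w \<in> W"
      show "w \<in> span R (bs @ cs)"
      proof (rule ccontr)
        assume nw: "w \<notin> span R (bs @ cs)"
        have "lin_indep R n ((bs @ cs) @ [w])"
          by (rule indep_snoc[OF cs(3)]) (use bc Wv w nw in auto)
        then have "P (Suc k)" unfolding P_def using cs w
          by (intro exI[of _ "cs @ [w]"]) auto
        then show False using kmax by fastforce
      qed
    qed
  qed
  then show ?thesis using cs by blast
qed

lemma subsp_basis:
  assumes W: "subsp R n W"
  shows "\<exists>cs. set cs \<subseteq> W \<and> lin_indep R n cs \<and> span R cs = W"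
  using extend_basis[OF W, of "[]"] by (simp add: lin_indep_def)

lemma subdim_card:
  assumes W: "subsp R n W"
  shows "card W = q ^ subdim R n W"
proof -
  obtain cs where cs: "set cs \<subseteq> W" "lin_indep R n cs" "span R cs = W"
    using subsp_basis[OF W] by blast
  have Wv: "W \<subseteq> vecs R n" using W subsp_vecs by blast
  have cW: "card W = q ^ length cs"
    using span_card_indep[OF cs(2)] cs Wv by auto
  let ?S = "{k. \<exists>vs. length vs = k \<and> set vs \<subseteq> W \<and> lin_indep R n vs}"
  have bound: "k \<le> length cs" if "k \<in> ?S" for k
  proof -
    from that obtain vs where vs: "length vs = k" "set vs \<subseteq> W" "lin_indep R n vs" by blast
    have "q ^ k \<le> card W" using indep_card_le[OF W vs(3) vs(2)] vs(1) by simp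
    then show ?thesis using cW pow_le_exp[of k "length cs"] by simp
  qed
  have "subdim R n W = length cs"
    unfolding subdim_def
  proof (rule Max_eqI)
    have "?S \<subseteq> {..length cs}" using bound by auto
    then show "finite ?S" by (rule finite_subset) simp
    show "\<And>y. y \<in> ?S \<Longrightarrow> y \<le> length cs" using bound by blast
    show "length cs \<in> ?S" using cs by blast
  qed
  then show ?thesis using cW by simp
qed

lemma subsp_card_dim:
  assumes W: "subsp R n W" "card W = q ^ d"
  shows "subdim R n W = d"
  using subdim_card[OF W(1)] W(2) pow_eq_exp[of "subdim R n W" d] by simp

lemma indep_full_span:
  assumes W: "subsp R n W" and ind: "lin_indep R n vs" "set vs \<subseteq> W" "card W = q ^ length vs"
  shows "span R vs = W"
proof -
  have Wv: "W \<subseteq> vecs R n" using W subsp_vecs by blast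
  have "card (span R vs) = card W" using span_card_indep[OF ind(1)] ind Wv by auto
  then show ?thesis using subsp_span[OF W ind(2)] subsp_finite[OF W] by (metis card_subset_eq)
qed

lemma Uk_subsp: "subsp R n (Uk k)"
  unfolding subsp_def
proof (intro conjI allI impI)
  show "Uk k \<subseteq> vecs R n" by (auto simp: Uk_def)
  fix vs c assume a: "set vs \<subseteq> Uk k \<and> (\<forall>k<length vs. c k \<in> carrier R)"
  have vs: "set vs \<subseteq> vecs R n" using a by (auto simp: Uk_def)
  have cc: "\<And>j. j < length vs \<Longrightarrow> c j \<in> carrier R" using a by auto
  have "lincomb R c vs j = \<zero>" if "j < k" for j
  proof -
    have z: "(vs ! i) j = \<zero>" if "i < length vs" for i
    proof -
      have "vs ! i \<in> Uk k" using a that by auto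
      then show ?thesis using \<open>j < k\<close> by (auto simp: Uk_def)
    qed
    have "lincomb R c vs j = (\<Oplus>i\<in>{..<length vs}. \<zero>)"
      unfolding lincomb_def using z cc by (intro finsum_cong) auto
    then show ?thesis by (simp add: finsum_zero)
  qed
  then show "lincomb R c vs \<in> Uk k" using lincomb_vecs[OF vs] cc by (auto simp: Uk_def)
qed

end


context ffield begin

lemma alg_test1: "a \<in> carrier R \<Longrightarrow> b \<in> carrier R \<Longrightarrow> a \<oplus> (b \<ominus> a) = b"
  by algebra

lemma alg_test2: "a \<in> carrier R \<Longrightarrow> b \<in> carrier R \<Longrightarrow> (a \<oplus> b) \<ominus> a = b"
  by algebra

lemma mats_carrier: "M \<in> mats R n \<Longrightarrow> M i j \<in> carrier R"
  unfolding mats_def by (cases "i < n \<and> j < n") auto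

lemma mats_zero: "M \<in> mats R n \<Longrightarrow> \<not> (i < n \<and> j < n) \<Longrightarrow> M i j = \<zero>"
  unfolding mats_def by auto

lemma mat_vec_carrier:
  assumes "M \<in> mats R n" "v \<in> vecs R n"
  shows "mat_vec R n M v i \<in> carrier R"
  unfolding mat_vec_def using assms
  by (auto intro!: finsum_closed simp: mats_carrier vecs_carrier)

lemma mat_vec_vecs:
  assumes "M \<in> mats R n" "v \<in> vecs R n"
  shows "mat_vec R n M v \<in> vecs R n"
proof -
  have a: "\<And>i. mat_vec R n M v i \<in> carrier R" by (rule mat_vec_carrier[OF assms])
  have b: "\<And>i. \<not> i < n \<Longrightarrow> mat_vec R n M v i = \<zero>" by (simp add: mat_vec_def)
  show ?thesis unfolding vecs_def using a b by (simp add: not_less)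
qed

lemma lincomb_zeros:
  assumes "set ws \<subseteq> {zvec R}" "\<And>k. k < length ws \<Longrightarrow> c k \<in> carrier R"
  shows "lincomb R c ws = zvec R"
proof (rule ext)
  fix i
  have z: "ws ! k = zvec R" if "k < length ws" for k using assms(1) nth_mem that by blast
  have "lincomb R c ws i = (\<Oplus>k\<in>{..<length ws}. \<zero>)"
    unfolding lincomb_def using z assms(2) by (intro finsum_cong) (auto simp: zvec_def)
  then show "lincomb R c ws i = zvec R i" by (simp add: finsum_zero zvec_def)
qed

lemma mat_vec_lincomb:
  assumes M: "M \<in> mats R n" and vs: "set vs \<subseteq> vecs R n"
    and c: "\<And>k. k < length vs \<Longrightarrow> c k \<in> carrier R"
  shows "mat_vec R n M (lincomb R c vs) = lincomb R c (map (mat_vec R n M) vs)"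
proof (rule ext)
  fix i
  have mv: "set (map (mat_vec R n M) vs) \<subseteq> vecs R n" using vs mat_vec_vecs[OF M] by auto
  show "mat_vec R n M (lincomb R c vs) i = lincomb R c (map (mat_vec R n M) vs) i"
  proof (cases "i < n")
    case True
    have "mat_vec R n M (lincomb R c vs) i = (\<Oplus>j\<in>{..<n}. M i j \<otimes> (\<Oplus>k\<in>{..<length vs}. c k \<otimes> (vs ! k) j))"
      using True by (simp add: mat_vec_def lincomb_def)
    also have "\<dots> = (\<Oplus>j\<in>{..<n}. \<Oplus>k\<in>{..<length vs}. M i j \<otimes> (c k \<otimes> (vs ! k) j))"
      using vs c by (intro finsum_cong) (auto simp: finsum_rdistr mats_carrier[OF M])
    also have "\<dots> = (\<Oplus>k\<in>{..<length vs}. \<Oplus>j\<in>{..<n}. M i j \<otimes> (c k \<otimes> (vs ! k) j))"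
      using vs c by (intro finsum_swap) (auto simp: mats_carrier[OF M])
    also have "\<dots> = (\<Oplus>k\<in>{..<length vs}. c k \<otimes> (\<Oplus>j\<in>{..<n}. M i j \<otimes> (vs ! k) j))"
      using vs c by (intro finsum_cong) (auto simp: finsum_rdistr mats_carrier[OF M] m_lcomm)
    also have "\<dots> = lincomb R c (map (mat_vec R n M) vs) i"
      unfolding lincomb_def using True vs c
      by (intro finsum_cong) (auto simp: mat_vec_def mats_carrier[OF M] intro!: finsum_closed)
    finally show ?thesis .
  next
    case False
    have "lincomb R c (map (mat_vec R n M) vs) i = (\<Oplus>k\<in>{..<length vs}. \<zero>)"
      unfolding lincomb_def using False c by (intro finsum_cong) (auto simp: mat_vec_def)
    then show ?thesis using False by (simp add: mat_vec_def finsum_zero)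
  qed
qed

lemma mat_vec_diff:
  assumes M: "M \<in> mats R n" and v: "v \<in> vecs R n" and w: "w \<in> vecs R n"
  shows "mat_vec R n M (\<lambda>i. v i \<ominus> w i) = (\<lambda>i. mat_vec R n M v i \<ominus> mat_vec R n M w i)"
proof (rule ext)
  fix i
  show "mat_vec R n M (\<lambda>i. v i \<ominus> w i) i = mat_vec R n M v i \<ominus> mat_vec R n M w i"
  proof (cases "i < n")
    case True
    have "mat_vec R n M (\<lambda>i. v i \<ominus> w i) i = (\<Oplus>j\<in>{..<n}. M i j \<otimes> v j \<oplus> \<ominus> (M i j \<otimes> w j))"
      using True M v w by (simp add: mat_vec_def) (intro finsum_cong, auto simp: mats_carrier vecs_carrier minus_eq r_distr r_minus)
    also have "\<dots> = mat_vec R n M v i \<ominus> mat_vec R n M w i"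
      using True M v w by (simp add: mat_vec_def finsum_addf finsum_neg mats_carrier vecs_carrier minus_eq)
    finally show ?thesis .
  next
    case False
    then show ?thesis by (simp add: mat_vec_def minus_eq)
  qed
qed

lemma mat_vec_add:
  assumes M: "M \<in> mats R n" and v: "v \<in> vecs R n" and w: "w \<in> vecs R n"
  shows "mat_vec R n M (\<lambda>i. v i \<oplus> w i) = (\<lambda>i. mat_vec R n M v i \<oplus> mat_vec R n M w i)"
proof (rule ext)
  fix i
  show "mat_vec R n M (\<lambda>i. v i \<oplus> w i) i = mat_vec R n M v i \<oplus> mat_vec R n M w i"
  proof (cases "i < n")
    case True
    have "mat_vec R n M (\<lambda>i. v i \<oplus> w i) i = (\<Oplus>j\<in>{..<n}. M i j \<otimes> v j \<oplus> M i j \<otimes> w j)"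
      using True M v w by (simp add: mat_vec_def) (intro finsum_cong, auto simp: mats_carrier vecs_carrier r_distr)
    also have "\<dots> = mat_vec R n M v i \<oplus> mat_vec R n M w i"
      using True M v w by (simp add: mat_vec_def finsum_addf mats_carrier vecs_carrier)
    finally show ?thesis .
  next
    case False
    then show ?thesis by (simp add: mat_vec_def)
  qed
qed

lemma mat_vec_mult:
  assumes M: "M \<in> mats R n" and N: "N \<in> mats R n" and v: "v \<in> vecs R n"
  shows "mat_vec R n M (mat_vec R n N v) = mat_vec R n (mat_mult R n M N) v"
proof (rule ext)
  fix i
  show "mat_vec R n M (mat_vec R n N v) i = mat_vec R n (mat_mult R n M N) v i"
  proof (cases "i < n")
    case True
    have "mat_vec R n M (mat_vec R n N v) i = (\<Oplus>k\<in>{..<n}. M i k \<otimes> (\<Oplus>j\<in>{..<n}. N k j \<otimes> v j))"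
      unfolding mat_vec_def using True M N v
      by (simp, intro finsum_cong) (auto simp: mats_carrier vecs_carrier intro!: finsum_closed)
    also have "\<dots> = (\<Oplus>k\<in>{..<n}. \<Oplus>j\<in>{..<n}. M i k \<otimes> (N k j \<otimes> v j))"
      using M N v by (intro finsum_cong) (auto simp: finsum_rdistr mats_carrier vecs_carrier)
    also have "\<dots> = (\<Oplus>j\<in>{..<n}. \<Oplus>k\<in>{..<n}. M i k \<otimes> (N k j \<otimes> v j))"
      using M N v by (intro finsum_swap) (auto simp: mats_carrier vecs_carrier)
    also have "\<dots> = (\<Oplus>j\<in>{..<n}. (\<Oplus>k\<in>{..<n}. M i k \<otimes> N k j) \<otimes> v j)"
      using M N v by (intro finsum_cong) (auto simp: finsum_ldistr mats_carrier vecs_carrier m_assoc)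
    also have "\<dots> = mat_vec R n (mat_mult R n M N) v i"
      unfolding mat_vec_def mat_mult_def using True M N v
      by (simp, intro finsum_cong) (auto simp: mats_carrier vecs_carrier intro!: finsum_closed)
    finally show ?thesis .
  next
    case False
    then show ?thesis by (simp add: mat_vec_def)
  qed
qed

definition evec :: "nat \<Rightarrow> nat \<Rightarrow> 'a" where
  "evec j = (\<lambda>i. if i = j then \<one> else \<zero>)"

lemma evec_vecs: "j < n \<Longrightarrow> evec j \<in> vecs R n"
  by (auto simp: evec_def vecs_def)

lemma mat_vec_evec:
  assumes M: "M \<in> mats R n" and ij: "i < n" "j < n"
  shows "mat_vec R n M (evec j) i = M i j"
proof -
  have pw: "\<And>k. M i k \<otimes> (if k = j then \<one> else \<zero>) = (if j = k then M i k else \<zero>)"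
    using mats_carrier[OF M] by auto
  have "mat_vec R n M (evec j) i = (\<Oplus>k\<in>{..<n}. if j = k then M i k else \<zero>)"
    unfolding mat_vec_def evec_def using ij by (simp only: pw if_True)
  also have "\<dots> = M i j" using ij by (intro finsum_singleton) (auto simp: mats_carrier[OF M])
  finally show ?thesis .
qed

lemma mats_eqI:
  assumes M: "M \<in> mats R n" and N: "N \<in> mats R n"
    and eq: "\<And>v. v \<in> vecs R n \<Longrightarrow> mat_vec R n M v = mat_vec R n N v"
  shows "M = N"
proof (intro ext)
  fix i j
  show "M i j = N i j"
  proof (cases "i < n \<and> j < n")
    case True
    then show ?thesis using mat_vec_evec[OF M, of i j] mat_vec_evec[OF N, of i j] eq[OF evec_vecs, of j] by simp
  next
    case False
    then show ?thesis using mats_zero[OF M] mats_zero[OF N] by simp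
  qed
qed

lemma mats_finite: "finite (mats R n)"
proof -
  let ?g = "\<lambda>f. \<lambda>i j. if i < n \<and> j < n then f (i, j) else \<zero>"
  have "mats R n \<subseteq> ?g ` (PiE ({..<n} \<times> {..<n}) (\<lambda>_. carrier R))"
  proof
    fix M assume M: "M \<in> mats R n"
    let ?f = "restrict (\<lambda>(i, j). M i j) ({..<n} \<times> {..<n})"
    have "?f \<in> PiE ({..<n} \<times> {..<n}) (\<lambda>_. carrier R)" using M by (auto simp: mats_carrier)
    moreover have "M = ?g ?f" using mats_zero[OF M] by (intro ext) auto
    ultimately show "M \<in> ?g ` (PiE ({..<n} \<times> {..<n}) (\<lambda>_. carrier R))" unfolding image_iff by blast
  qed
  moreover have "finite (PiE ({..<n} \<times> {..<n}) (\<lambda>_. carrier R))" using finR by (intro finite_PiE) auto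
  ultimately show ?thesis by (rule finite_subset[OF _ finite_imageI])
qed

lemma diff_finite: "finite (differentials R n)"
  using mats_finite by (rule finite_subset[rotated]) (auto simp: differentials_def)

lemma zero_mat_diff: "(\<lambda>i j. \<zero>) \<in> differentials R n"
  unfolding differentials_def mats_def mat_mult_def by (auto intro!: ext simp: finsum_zero)

lemma diff_nonempty: "card (differentials R n) > 0"
  using zero_mat_diff diff_finite by (auto simp: card_gt_0_iff)

lemma map_from_image:
  "set xs \<subseteq> f ` A \<Longrightarrow> \<exists>ys. set ys \<subseteq> A \<and> xs = map f ys"
proof (induction xs)
  case Nil then show ?case by simp
next
  case (Cons x xs)
  then obtain ys where "set ys \<subseteq> A" "xs = map f ys" by auto
  moreover obtain y where "y \<in> A" "x = f y" using Cons.prems by auto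
  ultimately show ?case by (intro exI[of _ "y # ys"]) auto
qed

lemma ker_subsp: assumes M: "M \<in> mats R n" shows "subsp R n (ker_d R n M)"
  unfolding subsp_def
proof (intro conjI allI impI)
  show "ker_d R n M \<subseteq> vecs R n" by (auto simp: ker_d_def)
  fix vs c assume a: "set vs \<subseteq> ker_d R n M \<and> (\<forall>k<length vs. c k \<in> carrier R)"
  have vs: "set vs \<subseteq> vecs R n" using a by (auto simp: ker_d_def)
  have cc: "\<And>j. j < length vs \<Longrightarrow> c j \<in> carrier R" using a by auto
  have "set (map (mat_vec R n M) vs) \<subseteq> {zvec R}" using a by (auto simp: ker_d_def)
  then have "mat_vec R n M (lincomb R c vs) = zvec R"
    using mat_vec_lincomb[OF M vs cc] lincomb_zeros[of "map (mat_vec R n M) vs" c] cc by simp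
  then show "lincomb R c vs \<in> ker_d R n M" using lincomb_vecs[OF vs] cc by (simp add: ker_d_def)
qed

lemma im_subsp: assumes M: "M \<in> mats R n" shows "subsp R n (im_d R n M)"
  unfolding subsp_def
proof (intro conjI allI impI)
  show "im_d R n M \<subseteq> vecs R n" using mat_vec_vecs[OF M] by (auto simp: im_d_def)
  fix vs c assume a: "set vs \<subseteq> im_d R n M \<and> (\<forall>k<length vs. c k \<in> carrier R)"
  obtain us where us: "set us \<subseteq> vecs R n" "vs = map (mat_vec R n M) us"
    using map_from_image[of vs "mat_vec R n M" "vecs R n"] a by (auto simp: im_d_def)
  have cc: "\<And>j. j < length us \<Longrightarrow> c j \<in> carrier R" using a us by auto
  have "lincomb R c vs = mat_vec R n M (lincomb R c us)"
    using mat_vec_lincomb[OF M us(1) cc] us(2) by simp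
  then show "lincomb R c vs \<in> im_d R n M" using lincomb_vecs[OF us(1) cc] by (simp add: im_d_def)
qed

end


context ffield begin

lemma vecs_subsp: "subsp R n (vecs R n)"
  using Uk_subsp[of 0] by (simp add: Uk0)

lemma rank_nullity:
  assumes M: "M \<in> mats R n"
  shows "card (im_d R n M) * card (ker_d R n M) = q ^ n"
proof -
  let ?K = "ker_d R n M" and ?I = "im_d R n M"
  define F where "F w = {v \<in> vecs R n. mat_vec R n M v = w}" for w
  have cover: "vecs R n = (\<Union>w\<in>?I. F w)"
    unfolding F_def im_d_def by auto
  have disj: "\<forall>w\<in>?I. \<forall>w'\<in>?I. w \<noteq> w' \<longrightarrow> F w \<inter> F w' = {}"
    unfolding F_def by auto
  have finF: "\<forall>w\<in>?I. finite (F w)"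
    unfolding F_def using vecs_card(1) by auto
  have finI: "finite ?I" unfolding im_d_def using vecs_card(1) by simp
  have cF: "card (F w) = card ?K" if w: "w \<in> ?I" for w
  proof -
    obtain v0 where v0: "v0 \<in> vecs R n" "mat_vec R n M v0 = w" using w unfolding im_d_def by auto
    have wv: "w \<in> vecs R n" using v0 mat_vec_vecs[OF M] by blast
    define h where "h z = (\<lambda>i. v0 i \<oplus> z i)" for z
    have inj: "inj_on h ?K"
    proof (rule inj_onI)
      fix z z' assume z: "z \<in> ?K" and z': "z' \<in> ?K" and eq: "h z = h z'"
      show "z = z'"
      proof (rule ext)
        fix i
        have zc: "z i \<in> carrier R" "z' i \<in> carrier R" "v0 i \<in> carrier R"
          using z z' v0(1) by (auto simp: ker_d_def vecs_carrier)
        have "v0 i \<oplus> z i = v0 i \<oplus> z' i" using fun_cong[OF eq, of i] by (simp add: h_def)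
        then have "(v0 i \<oplus> z i) \<ominus> v0 i = (v0 i \<oplus> z' i) \<ominus> v0 i" by simp
        then show "z i = z' i" using zc by (simp add: alg_test2)
      qed
    qed
    have img: "h ` ?K = F w"
    proof
      show "h ` ?K \<subseteq> F w"
      proof
        fix x assume "x \<in> h ` ?K"
        then obtain z where z: "z \<in> ?K" "x = h z" by auto
        have zv: "z \<in> vecs R n" and zz: "mat_vec R n M z = zvec R" using z by (auto simp: ker_d_def)
        have xv: "x \<in> vecs R n"
          unfolding vecs_def using z(2) zv v0(1) by (auto simp: h_def vecs_def)
        have "mat_vec R n M x = (\<lambda>i. w i \<oplus> zvec R i)"
          using mat_vec_add[OF M v0(1) zv] z(2) v0(2) zz by (simp add: h_def)
        also have "\<dots> = w" using wv by (auto simp: zvec_def vecs_carrier)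
        finally show "x \<in> F w" using xv by (simp add: F_def)
      qed
    next
      show "F w \<subseteq> h ` ?K"
      proof
        fix v assume v: "v \<in> F w"
        then have vv: "v \<in> vecs R n" and mv: "mat_vec R n M v = w" by (auto simp: F_def)
        let ?z = "\<lambda>i. v i \<ominus> v0 i"
        have zv: "?z \<in> vecs R n"
          unfolding vecs_def using vv v0(1) by (auto simp: vecs_def minus_eq)
        have "mat_vec R n M ?z = (\<lambda>i. w i \<ominus> w i)"
          using mat_vec_diff[OF M vv v0(1)] mv v0(2) by simp
        also have "\<dots> = zvec R" using wv by (auto simp: zvec_def vecs_carrier)
        finally have zk: "?z \<in> ?K" using zv by (simp add: ker_d_def)
        have "h ?z = v"
        proof (rule ext)
          fix i
          show "h ?z i = v i" using vv v0(1) by (simp add: h_def alg_test1 vecs_carrier)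
        qed
        then show "v \<in> h ` ?K" using zk by (metis imageI)
      qed
    qed
    show ?thesis using inj img by (metis card_image)
  qed
  have "q ^ n = card (\<Union>w\<in>?I. F w)" using cover vecs_card(2) by simp
  also have "\<dots> = (\<Sum>w\<in>?I. card (F w))" using finI finF disj by (rule card_UN_disjoint)
  also have "\<dots> = (\<Sum>w\<in>?I. card ?K)" using cF by simp
  also have "\<dots> = card ?I * card ?K" by simp
  finally show ?thesis by simp
qed

lemma mat_vec_zero_mat: "mat_vec R n (\<lambda>i j. \<zero>) v = zvec R" if "v \<in> vecs R n"
  using that by (intro ext) (simp add: mat_vec_def zvec_def finsum_zero vecs_carrier)

lemma diff_mats: "M \<in> differentials R n \<Longrightarrow> M \<in> mats R n"
  by (simp add: differentials_def)

lemma diff_im_ker: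
  assumes D: "M \<in> differentials R n"
  shows "im_d R n M \<subseteq> ker_d R n M"
proof
  have M: "M \<in> mats R n" using D by (simp add: differentials_def)
  have MM: "mat_mult R n M M = (\<lambda>i j. \<zero>)" using D by (simp add: differentials_def)
  fix w assume "w \<in> im_d R n M"
  then obtain v where v: "v \<in> vecs R n" "w = mat_vec R n M v" by (auto simp: im_d_def)
  have "mat_vec R n M w = zvec R"
    using v mat_vec_mult[OF M M v(1)] MM mat_vec_zero_mat[OF v(1)] by simp
  then show "w \<in> ker_d R n M" using v mat_vec_vecs[OF M] by (simp add: ker_d_def)
qed

definition rk :: "(nat \<Rightarrow> nat \<Rightarrow> 'a) \<Rightarrow> nat" where
  "rk M = subdim R n (im_d R n M)"

lemma diff_dims:
  assumes D: "M \<in> differentials R n"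
  shows "card (im_d R n M) = q ^ rk M" "homology_dim R n M = n - 2 * rk M" "2 * rk M \<le> n"
proof -
  have M: "M \<in> mats R n" using D by (simp add: differentials_def)
  have ci: "card (im_d R n M) = q ^ rk M" unfolding rk_def by (rule subdim_card[OF im_subsp[OF M]])
  have ck: "card (ker_d R n M) = q ^ subdim R n (ker_d R n M)" by (rule subdim_card[OF ker_subsp[OF M]])
  have "q ^ (rk M + subdim R n (ker_d R n M)) = q ^ n"
    using rank_nullity[OF M] ci ck by (simp add: power_add)
  then have sum: "rk M + subdim R n (ker_d R n M) = n" by (rule pow_eq_exp)
  have "card (im_d R n M) \<le> card (ker_d R n M)"
    using diff_im_ker[OF D] subsp_finite[OF ker_subsp[OF M]] by (rule card_mono[rotated])
  then have le: "rk M \<le> subdim R n (ker_d R n M)" using ci ck pow_le_exp by simp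
  show "card (im_d R n M) = q ^ rk M" by (rule ci)
  show "homology_dim R n M = n - 2 * rk M"
    unfolding homology_dim_def rk_def[symmetric] using sum le by simp
  show "2 * rk M \<le> n" using sum le by simp
qed

definition ILs :: "(nat \<Rightarrow> 'a) set \<Rightarrow> nat \<Rightarrow> (nat \<Rightarrow> 'a) list set" where
  "ILs W j = {vs. length vs = j \<and> set vs \<subseteq> W \<and> lin_indep R n vs}"

lemma ILs_sub: "ILs W j \<subseteq> {vs. set vs \<subseteq> W \<and> length vs = j}"
  by (auto simp: ILs_def)

lemma ILs_finite: assumes W: "W \<subseteq> vecs R n" shows "finite (ILs W j)"
proof -
  have fW: "finite W" using W vecs_card(1) finite_subset by blast
  show ?thesis by (rule finite_subset[OF ILs_sub finite_lists_length_eq[OF fW]])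
qed

lemma ILs_card_le: "W \<subseteq> vecs R n \<Longrightarrow> card (ILs W j) \<le> card W ^ j"
proof -
  assume W: "W \<subseteq> vecs R n"
  have fW: "finite W" using W vecs_card(1) finite_subset by blast
  have "card (ILs W j) \<le> card {vs. set vs \<subseteq> W \<and> length vs = j}"
    using ILs_sub finite_lists_length_eq[OF fW] by (rule card_mono[rotated])
  also have "\<dots> = card W ^ j" using fW by (rule card_lists_length_eq)
  finally show ?thesis .
qed

lemma ILs_card_ge:
  assumes W: "subsp R n W" "card W = q ^ m"
  shows "j \<le> m \<Longrightarrow> real (card (ILs W j)) \<ge> (real q ^ m - real q ^ (m - 1)) ^ j"
proof (induction j)
  case 0
  have "ILs W 0 = {[]}" by (auto simp: ILs_def lin_indep_def)
  then show ?case by simp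
next
  case (Suc j)
  have Wv: "W \<subseteq> vecs R n" using W(1) subsp_vecs by blast
  have fW: "finite W" using W(1) subsp_finite by blast
  let ?S = "SIGMA vs:ILs W j. W - span R vs"
  let ?g = "\<lambda>(vs, v). vs @ [v]"
  have sub: "?g ` ?S \<subseteq> ILs W (Suc j)"
  proof
    fix x assume "x \<in> ?g ` ?S"
    then obtain vs v where vs: "vs \<in> ILs W j" and v: "v \<in> W" "v \<notin> span R vs" and x: "x = vs @ [v]"
      by auto
    have "lin_indep R n (vs @ [v])"
      using vs v Wv by (intro indep_snoc) (auto simp: ILs_def)
    then show "x \<in> ILs W (Suc j)" using vs v x by (auto simp: ILs_def)
  qed
  have inj: "inj_on ?g ?S" by (rule inj_onI) auto
  have fin: "finite (ILs W (Suc j))" using ILs_finite[OF Wv] .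
  have cS: "card ?S = (\<Sum>vs\<in>ILs W j. card (W - span R vs))"
    using ILs_finite[OF Wv] fW by (intro card_SigmaI) auto
  have each: "real (card (W - span R vs)) \<ge> real q ^ m - real q ^ (m - 1)" if vs: "vs \<in> ILs W j" for vs
  proof -
    have vsW: "set vs \<subseteq> W" "lin_indep R n vs" "length vs = j" using vs by (auto simp: ILs_def)
    have spW: "span R vs \<subseteq> W" by (rule subsp_span[OF W(1) vsW(1)])
    have csp: "card (span R vs) = q ^ j" using span_card_indep[OF vsW(2)] vsW Wv by auto
    have "card (W - span R vs) = card W - card (span R vs)"
      using span_finite spW by (rule card_Diff_subset)
    then have "real (card (W - span R vs)) = real q ^ m - real q ^ j"
      using csp W(2) card_mono[OF fW spW] by (simp add: of_nat_diff)
    moreover have "real q ^ j \<le> real q ^ (m - 1)"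
      using Suc.prems q_ge2 by (intro power_increasing) auto
    ultimately show ?thesis by simp
  qed
  have "(real q ^ m - real q ^ (m - 1)) ^ Suc j = (real q ^ m - real q ^ (m - 1)) ^ j * (real q ^ m - real q ^ (m - 1))"
    by simp
  also have "\<dots> \<le> real (card (ILs W j)) * (real q ^ m - real q ^ (m - 1))"
  proof (rule mult_right_mono)
    show "(real q ^ m - real q ^ (m - 1)) ^ j \<le> real (card (ILs W j))" using Suc by simp
    have "real q ^ (m - 1) \<le> real q ^ m" using q_ge2 by (intro power_increasing) auto
    then show "0 \<le> real q ^ m - real q ^ (m - 1)" by simp
  qed
  also have "\<dots> \<le> (\<Sum>vs\<in>ILs W j. real (card (W - span R vs)))"
    using sum_bounded_below[of "ILs W j" "real q ^ m - real q ^ (m - 1)" "\<lambda>vs. real (card (W - span R vs))"] each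
    by simp
  also have "\<dots> = real (card ?S)" using cS by simp
  also have "\<dots> = real (card (?g ` ?S))" using inj by (simp add: card_image)
  also have "\<dots> \<le> real (card (ILs W (Suc j)))" using card_mono[OF fin sub] by simp
  finally show ?case .
qed

lemma ILs_card_ge2:
  assumes W: "subsp R n W" "card W = q ^ m" and j: "j \<le> m"
  shows "real (card (ILs W j)) \<ge> (real q ^ m / 2) ^ j"
proof (cases "j = 0")
  case True
  then show ?thesis using ILs_card_ge[OF W j] by simp
next
  case False
  then have m: "m \<ge> 1" using j by simp
  have q2: "real q \<ge> 2" using q_ge2 by simp
  have "real q ^ m = real q * real q ^ (m - 1)" using m by (metis power_eq_if not_one_le_zero)
  then have "real q ^ m / 2 \<le> real q ^ m - real q ^ (m - 1)"
    using q2 by (simp add: field_simps)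
  then have "(real q ^ m / 2) ^ j \<le> (real q ^ m - real q ^ (m - 1)) ^ j"
    by (intro power_mono) auto
  then show ?thesis using ILs_card_ge[OF W j] by linarith
qed

end


context ffield begin

definition Lset :: "(nat \<Rightarrow> 'a) list \<Rightarrow> (nat \<Rightarrow> nat \<Rightarrow> 'a) set" where
  "Lset bs = {M \<in> mats R n. (\<forall>v\<in>vecs R n. mat_vec R n M v \<in> span R bs) \<and>
                 (\<forall>u\<in>set bs. mat_vec R n M u = zvec R)}"

lemma Lset_finite: "finite (Lset bs)"
  using mats_finite by (rule finite_subset[rotated]) (auto simp: Lset_def)

lemma Lset_card:
  assumes ind: "lin_indep R n bs" and bs: "set bs \<subseteq> vecs R n"
  shows "card (Lset bs) \<le> q ^ (length bs * (n - length bs))"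
proof -
  obtain cs where cs: "set cs \<subseteq> vecs R n" "lin_indep R n (bs @ cs)" "span R (bs @ cs) = vecs R n"
    using extend_basis[OF vecs_subsp ind bs] by blast
  have bcv: "set (bs @ cs) \<subseteq> vecs R n" using bs cs by auto
  have "q ^ (length bs + length cs) = q ^ n"
    using span_card_indep[OF cs(2) bcv] cs(3) vecs_card(2) by simp
  then have len: "length bs + length cs = n" by (rule pow_eq_exp)
  let ?P = "\<lambda>M. map (mat_vec R n M) cs"
  let ?T = "{xs. set xs \<subseteq> span R bs \<and> length xs = length cs}"
  have sub: "?P ` Lset bs \<subseteq> ?T"
  proof
    fix xs assume "xs \<in> ?P ` Lset bs"
    then obtain M where M: "M \<in> Lset bs" and xs: "xs = ?P M" by blast
    have "\<forall>v\<in>vecs R n. mat_vec R n M v \<in> span R bs" using M by (simp add: Lset_def)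
    then have "\<forall>x\<in>set cs. mat_vec R n M x \<in> span R bs" using cs(1) by blast
    then show "xs \<in> ?T" using xs by auto
  qed
  have inj: "inj_on ?P (Lset bs)"
  proof (rule inj_onI)
    fix M N assume M: "M \<in> Lset bs" and N: "N \<in> Lset bs" and eq: "?P M = ?P N"
    have Mm: "M \<in> mats R n" and Nm: "N \<in> mats R n" using M N by (auto simp: Lset_def)
    have mb: "map (mat_vec R n M) bs = map (mat_vec R n N) bs"
      using M N by (auto simp: Lset_def)
    have mbc: "map (mat_vec R n M) (bs @ cs) = map (mat_vec R n N) (bs @ cs)"
      using mb eq by simp
    show "M = N"
    proof (rule mats_eqI[OF Mm Nm])
      fix v assume v: "v \<in> vecs R n"
      then have "v \<in> span R (bs @ cs)" using cs(3) by simp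
      then obtain c where c: "\<forall>k<length (bs @ cs). c k \<in> carrier R" "v = lincomb R c (bs @ cs)"
        using span_iff[OF bcv] by blast
      have "mat_vec R n M v = lincomb R c (map (mat_vec R n M) (bs @ cs))"
        using mat_vec_lincomb[OF Mm bcv] c by simp
      also have "\<dots> = lincomb R c (map (mat_vec R n N) (bs @ cs))" by (simp only: mbc)
      also have "\<dots> = mat_vec R n N v"
        using mat_vec_lincomb[OF Nm bcv] c by simp
      finally show "mat_vec R n M v = mat_vec R n N v" .
    qed
  qed
  have "card (Lset bs) = card (?P ` Lset bs)" using inj by (simp add: card_image)
  also have "\<dots> \<le> card ?T" using sub finite_lists_length_eq[OF span_finite] by (rule card_mono[rotated])
  also have "\<dots> = card (span R bs) ^ length cs" using span_finite by (rule card_lists_length_eq)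
  also have "\<dots> = q ^ (length bs * length cs)"
    using span_card_indep[OF ind bs] by (simp add: power_mult)
  finally show ?thesis using len by (metis add_diff_cancel_left')
qed

lemma Dm_bound:
  assumes m: "2 * m \<le> n"
  shows "real (card {M \<in> differentials R n. rk M = m}) \<le> 2 ^ m * real q ^ (2 * m * (n - m))"
proof -
  let ?D = "{M \<in> differentials R n. rk M = m}"
  let ?S = "SIGMA M:?D. ILs (im_d R n M) m"
  let ?T = "SIGMA bs:ILs (vecs R n) m. Lset bs"
  have finD: "finite ?D" using diff_finite by simp
  have imv: "\<And>M. M \<in> ?D \<Longrightarrow> im_d R n M \<subseteq> vecs R n"
    using im_subsp subsp_vecs diff_mats by blast
  have cS: "card ?S = (\<Sum>M\<in>?D. card (ILs (im_d R n M) m))"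
    using finD ILs_finite imv by (intro card_SigmaI) auto
  have q2: "real q \<ge> 2" using q_ge2 by simp
  have each: "real (card (ILs (im_d R n M) m)) \<ge> (real q ^ m / 2) ^ m" if M: "M \<in> ?D" for M
  proof -
    have "M \<in> differentials R n" "rk M = m" using M by auto
    then have "card (im_d R n M) = q ^ m" using diff_dims(1) by simp
    then show ?thesis using ILs_card_ge2[OF im_subsp[OF diff_mats]] M by auto
  qed
  have low: "real (card ?D) * (real q ^ m / 2) ^ m \<le> real (card ?S)"
    using sum_bounded_below[of ?D "(real q ^ m / 2) ^ m" "\<lambda>M. real (card (ILs (im_d R n M) m))"] each cS
    by simp
  let ?sw = "\<lambda>(M, bs). (bs, M)"
  have inj: "inj_on ?sw ?S" by (rule inj_onI) auto
  have sub: "?sw ` ?S \<subseteq> ?T"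
  proof
    fix x assume "x \<in> ?sw ` ?S"
    then obtain M bs where M: "M \<in> ?D" and bs: "bs \<in> ILs (im_d R n M) m" and x: "x = (bs, M)" by auto
    have D: "M \<in> differentials R n" and rkm: "rk M = m" using M by auto
    have Mm: "M \<in> mats R n" using D by (rule diff_mats)
    have bs': "length bs = m" "set bs \<subseteq> im_d R n M" "lin_indep R n bs" using bs by (auto simp: ILs_def)
    have spn: "span R bs = im_d R n M"
      using indep_full_span[OF im_subsp[OF Mm] bs'(3) bs'(2)] diff_dims(1)[OF D] rkm bs'(1) by simp
    have "bs \<in> ILs (vecs R n) m" using bs' imv[OF M] by (auto simp: ILs_def)
    moreover have "M \<in> Lset bs"
      unfolding Lset_def
    proof (intro CollectI conjI ballI)
      show "M \<in> mats R n" by (rule Mm)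
      fix v assume "v \<in> vecs R n"
      then show "mat_vec R n M v \<in> span R bs" using spn by (simp add: im_d_def)
    next
      fix u assume "u \<in> set bs"
      then have "u \<in> ker_d R n M" using bs'(2) diff_im_ker[OF D] by blast
      then show "mat_vec R n M u = zvec R" by (simp add: ker_d_def)
    qed
    ultimately show "x \<in> ?T" using x by simp
  qed
  have finT: "finite ?T" using ILs_finite[of "vecs R n"] Lset_finite by auto
  have cT: "card ?T = (\<Sum>bs\<in>ILs (vecs R n) m. card (Lset bs))"
    using ILs_finite[of "vecs R n"] Lset_finite by (intro card_SigmaI) auto
  have eachT: "real (card (Lset bs)) \<le> real q ^ (m * (n - m))" if bs: "bs \<in> ILs (vecs R n) m" for bs
  proof -
    have "length bs = m" "lin_indep R n bs" "set bs \<subseteq> vecs R n" using bs by (auto simp: ILs_def)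
    then have "card (Lset bs) \<le> q ^ (m * (n - m))" using Lset_card by metis
    then show ?thesis by (metis of_nat_le_iff of_nat_power)
  qed
  have cIL: "real (card (ILs (vecs R n) m)) \<le> real q ^ (n * m)"
  proof -
    have "card (ILs (vecs R n) m) \<le> card (vecs R n) ^ m" by (rule ILs_card_le) simp
    then have "card (ILs (vecs R n) m) \<le> q ^ (n * m)" using vecs_card(2) by (simp add: power_mult)
    then show ?thesis by (metis of_nat_le_iff of_nat_power)
  qed
  have "real (card ?S) = real (card (?sw ` ?S))" using inj by (simp add: card_image)
  also have "\<dots> \<le> real (card ?T)" using card_mono[OF finT sub] by simp
  also have "\<dots> = (\<Sum>bs\<in>ILs (vecs R n) m. real (card (Lset bs)))" using cT by simp
  also have "\<dots> \<le> real (card (ILs (vecs R n) m)) * real q ^ (m * (n - m))"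
    using sum_bounded_above[of "ILs (vecs R n) m" "\<lambda>bs. real (card (Lset bs))" "real q ^ (m * (n - m))"] eachT
    by simp
  also have "\<dots> \<le> real q ^ (n * m) * real q ^ (m * (n - m))"
    using cIL by (intro mult_right_mono) auto
  finally have up: "real (card ?S) \<le> real q ^ (n * m) * real q ^ (m * (n - m))" .
  have e1: "real q ^ (n * m) * real q ^ (m * (n - m)) = real q ^ (m * m) * real q ^ (2 * m * (n - m))"
  proof -
    have "n * m + m * (n - m) = m * m + 2 * m * (n - m)"
    proof -
      have "n = m + (n - m)" using m by simp
      then have "n * m = m * m + m * (n - m)" by (metis add_mult_distrib mult.commute)
      then show ?thesis by simp
    qed
    then show ?thesis by (metis power_add)
  qed
  have e2: "(real q ^ m / 2) ^ m = real q ^ (m * m) / 2 ^ m"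
    by (simp add: power_divide power_mult)
  have pos: "real q ^ (m * m) > 0" using q2 by simp
  have "real (card ?D) * (real q ^ (m * m) / 2 ^ m) \<le> real q ^ (m * m) * real q ^ (2 * m * (n - m))"
    using low up e1 e2 by simp
  then have "real (card ?D) * real q ^ (m * m) \<le> (2 ^ m * real q ^ (2 * m * (n - m))) * real q ^ (m * m)"
    by (simp add: field_simps)
  then show ?thesis using pos by (meson mult_le_cancel_right_pos)
qed

end


context ffield begin

lemma sum_quad_zero:
  assumes fin: "finite A" "finite B" "finite L"
    and x: "\<And>a. a \<in> A \<Longrightarrow> x a \<in> carrier R"
    and r: "\<And>a l. a \<in> A \<Longrightarrow> l \<in> L \<Longrightarrow> r a l \<in> carrier R"
    and u: "\<And>l b. l \<in> L \<Longrightarrow> b \<in> B \<Longrightarrow> u l b \<in> carrier R"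
    and y: "\<And>b. b \<in> B \<Longrightarrow> y b \<in> carrier R"
    and z: "\<And>a b. a \<in> A \<Longrightarrow> b \<in> B \<Longrightarrow> (\<Oplus>l\<in>L. r a l \<otimes> u l b) = \<zero>"
  shows "(\<Oplus>l\<in>L. (\<Oplus>a\<in>A. x a \<otimes> r a l) \<otimes> (\<Oplus>b\<in>B. u l b \<otimes> y b)) = \<zero>"
proof -
  have "(\<Oplus>l\<in>L. (\<Oplus>a\<in>A. x a \<otimes> r a l) \<otimes> (\<Oplus>b\<in>B. u l b \<otimes> y b))
      = (\<Oplus>l\<in>L. \<Oplus>a\<in>A. \<Oplus>b\<in>B. x a \<otimes> r a l \<otimes> (u l b \<otimes> y b))"
  proof (rule finsum_cong')
    show "L = L" by simp
  next
    fix l assume l: "l \<in> L"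
    have "(\<Oplus>a\<in>A. x a \<otimes> r a l) \<otimes> (\<Oplus>b\<in>B. u l b \<otimes> y b)
        = (\<Oplus>a\<in>A. x a \<otimes> r a l \<otimes> (\<Oplus>b\<in>B. u l b \<otimes> y b))"
      using l x r u y fin by (intro finsum_ldistr) (auto intro!: finsum_closed)
    also have "\<dots> = (\<Oplus>a\<in>A. \<Oplus>b\<in>B. x a \<otimes> r a l \<otimes> (u l b \<otimes> y b))"
      using l x r u y fin by (intro finsum_cong) (auto simp: finsum_rdistr)
    finally show "(\<Oplus>a\<in>A. x a \<otimes> r a l) \<otimes> (\<Oplus>b\<in>B. u l b \<otimes> y b)
        = (\<Oplus>a\<in>A. \<Oplus>b\<in>B. x a \<otimes> r a l \<otimes> (u l b \<otimes> y b))" .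
  next
    show "(\<lambda>l. \<Oplus>a\<in>A. \<Oplus>b\<in>B. x a \<otimes> r a l \<otimes> (u l b \<otimes> y b)) \<in> L \<rightarrow> carrier R"
      using x r u y fin by (auto intro!: finsum_closed)
  qed
  also have "\<dots> = (\<Oplus>a\<in>A. \<Oplus>l\<in>L. \<Oplus>b\<in>B. x a \<otimes> r a l \<otimes> (u l b \<otimes> y b))"
    using x r u y fin by (intro finsum_swap) (auto intro!: finsum_closed)
  also have "\<dots> = (\<Oplus>a\<in>A. \<Oplus>b\<in>B. \<Oplus>l\<in>L. x a \<otimes> r a l \<otimes> (u l b \<otimes> y b))"
  proof -
    have sw: "(\<Oplus>l\<in>L. \<Oplus>b\<in>B. x a \<otimes> r a l \<otimes> (u l b \<otimes> y b)) = (\<Oplus>b\<in>B. \<Oplus>l\<in>L. x a \<otimes> r a l \<otimes> (u l b \<otimes> y b))"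
      if a: "a \<in> A" for a
      using a x r u y fin by (intro finsum_swap) auto
    show ?thesis using sw x r u y fin by (intro finsum_cong) (auto intro!: finsum_closed)
  qed
  also have "\<dots> = (\<Oplus>a\<in>A. \<Oplus>b\<in>B. x a \<otimes> (\<Oplus>l\<in>L. r a l \<otimes> u l b) \<otimes> y b)"
  proof -
    have pw: "(\<Oplus>l\<in>L. x a \<otimes> r a l \<otimes> (u l b \<otimes> y b)) = x a \<otimes> (\<Oplus>l\<in>L. r a l \<otimes> u l b) \<otimes> y b"
      if a: "a \<in> A" and b: "b \<in> B" for a b
    proof -
      have "x a \<otimes> (\<Oplus>l\<in>L. r a l \<otimes> u l b) \<otimes> y b = (\<Oplus>l\<in>L. x a \<otimes> (r a l \<otimes> u l b)) \<otimes> y b"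
        using a b x r u y fin by (simp add: finsum_rdistr)
      also have "\<dots> = (\<Oplus>l\<in>L. x a \<otimes> (r a l \<otimes> u l b) \<otimes> y b)"
        using a b x r u y fin by (simp add: finsum_ldistr)
      also have "\<dots> = (\<Oplus>l\<in>L. x a \<otimes> r a l \<otimes> (u l b \<otimes> y b))"
        using a b x r u y fin by (intro finsum_cong) (auto simp: m_assoc)
      finally show ?thesis by simp
    qed
    have pw2: "(\<Oplus>b\<in>B. \<Oplus>l\<in>L. x a \<otimes> r a l \<otimes> (u l b \<otimes> y b)) = (\<Oplus>b\<in>B. x a \<otimes> (\<Oplus>l\<in>L. r a l \<otimes> u l b) \<otimes> y b)"
      if a: "a \<in> A" for a
      using a pw x r u y fin by (intro finsum_cong) (auto intro!: finsum_closed)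
    show ?thesis using pw2 x r u y fin by (intro finsum_cong) (auto intro!: finsum_closed)
  qed
  also have "\<dots> = (\<Oplus>a\<in>A. \<zero>)"
  proof -
    have i0: "(\<Oplus>b\<in>B. x a \<otimes> (\<Oplus>l\<in>L. r a l \<otimes> u l b) \<otimes> y b) = \<zero>" if a: "a \<in> A" for a
    proof -
      have "(\<Oplus>b\<in>B. x a \<otimes> (\<Oplus>l\<in>L. r a l \<otimes> u l b) \<otimes> y b) = (\<Oplus>b\<in>B. \<zero>)"
        using a x y z by (intro finsum_cong) auto
      then show ?thesis by (simp add: finsum_zero)
    qed
    show ?thesis using i0 by (intro finsum_cong) auto
  qed
  also have "\<dots> = \<zero>" by (simp add: finsum_zero)
  finally show ?thesis .
qed

definition Ufun :: "nat \<Rightarrow> (nat \<Rightarrow> 'a) list \<Rightarrow> nat \<Rightarrow> nat \<Rightarrow> 'a" where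
  "Ufun k ys i a = (if i < k then (if i = a then \<one> else \<zero>) else (ys ! a) i)"

definition Rfun :: "nat \<Rightarrow> (nat \<Rightarrow> 'a) list \<Rightarrow> (nat \<Rightarrow> 'a) list \<Rightarrow> nat \<Rightarrow> nat \<Rightarrow> 'a" where
  "Rfun k ys ws a j = (if k \<le> j then (ws ! a) j else \<ominus> (\<Oplus>c\<in>{k..<n}. (ws ! a) c \<otimes> (ys ! j) c))"

definition fam :: "nat \<Rightarrow> (nat \<Rightarrow> 'a) list \<Rightarrow> (nat \<Rightarrow> 'a) list \<Rightarrow> nat \<Rightarrow> nat \<Rightarrow> 'a" where
  "fam k ys ws = (\<lambda>i j. if i < n \<and> j < n then \<Oplus>a\<in>{..<k}. Ufun k ys i a \<otimes> Rfun k ys ws a j else \<zero>)"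

lemma Uk_vecs: "v \<in> Uk k \<Longrightarrow> v \<in> vecs R n" by (simp add: Uk_def)
lemma Uk_low: "v \<in> Uk k \<Longrightarrow> j < k \<Longrightarrow> v j = \<zero>" by (simp add: Uk_def)
lemma Uk_carrier: "v \<in> Uk k \<Longrightarrow> v j \<in> carrier R" by (rule vecs_carrier[OF Uk_vecs])

lemma nth_Uk: "set ys \<subseteq> Uk k \<Longrightarrow> a < length ys \<Longrightarrow> ys ! a \<in> Uk k" by auto

end

locale famctx = ffield +
  fixes k :: nat and ys ws :: "(nat \<Rightarrow> 'a) list"
  assumes kn: "k \<le> n"
    and ys: "length ys = k" "set ys \<subseteq> Uk k"
    and ws: "length ws = k" "set ws \<subseteq> Uk k"
begin

lemma ys_Uk: "a < k \<Longrightarrow> ys ! a \<in> Uk k"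
  using nth_Uk[OF ys(2), of a] ys(1) by simp
lemma ws_Uk: "a < k \<Longrightarrow> ws ! a \<in> Uk k"
  using nth_Uk[OF ws(2), of a] ws(1) by simp
lemma ys_car: "a < k \<Longrightarrow> (ys ! a) i \<in> carrier R"
  by (rule Uk_carrier[OF ys_Uk])
lemma ws_car: "a < k \<Longrightarrow> (ws ! a) i \<in> carrier R"
  by (rule Uk_carrier[OF ws_Uk])

lemma Ufun_car: "a < k \<Longrightarrow> Ufun k ys i a \<in> carrier R"
  by (simp add: Ufun_def ys_car)

lemma Rfun_car: "a < k \<Longrightarrow> Rfun k ys ws a j \<in> carrier R"
proof (cases "k \<le> j")
  case True
  assume "a < k" then show ?thesis using True by (simp add: Rfun_def ws_car)
next
  case False
  assume a: "a < k"
  have "(\<Oplus>c\<in>{k..<n}. (ws ! a) c \<otimes> (ys ! j) c) \<in> carrier R"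
    using a False by (intro finsum_closed) (auto simp: ws_car ys_car)
  then show ?thesis using False by (simp add: Rfun_def)
qed

lemma fam_car: "fam k ys ws i j \<in> carrier R"
  unfolding fam_def by (auto intro!: finsum_closed simp: Ufun_car Rfun_car)

lemma fam_mats: "fam k ys ws \<in> mats R n"
proof -
  have fz: "\<And>i j. \<not> (i < n \<and> j < n) \<Longrightarrow> fam k ys ws i j = \<zero>" unfolding fam_def by presburger
  show ?thesis unfolding mats_def using fam_car fz by blast
qed

lemma inner_zero:
  assumes a: "a < k" and b: "b < k"
  shows "(\<Oplus>l\<in>{..<n}. Rfun k ys ws a l \<otimes> Ufun k ys l b) = \<zero>"
proof -
  let ?T = "\<Oplus>c\<in>{k..<n}. (ws ! a) c \<otimes> (ys ! b) c"
  have Tc: "?T \<in> carrier R" using a b by (intro finsum_closed) (auto simp: ws_car ys_car)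
  have un: "{..<n} = {..<k} \<union> {k..<n}" using kn by auto
  have s1: "(\<Oplus>l\<in>{..<k}. Rfun k ys ws a l \<otimes> Ufun k ys l b) = \<ominus> ?T"
  proof -
    have pw: "\<And>l. l < k \<Longrightarrow> Rfun k ys ws a l \<otimes> Ufun k ys l b = (if b = l then Rfun k ys ws a l else \<zero>)"
      using a by (auto simp: Ufun_def Rfun_car)
    have "(\<Oplus>l\<in>{..<k}. Rfun k ys ws a l \<otimes> Ufun k ys l b) = (\<Oplus>l\<in>{..<k}. if b = l then Rfun k ys ws a l else \<zero>)"
      using a pw by (intro finsum_cong) (auto simp: Rfun_car)
    also have "\<dots> = Rfun k ys ws a b" using a b by (intro finsum_singleton) (auto simp: Rfun_car)
    also have "\<dots> = \<ominus> ?T" using b by (simp add: Rfun_def)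
    finally show ?thesis .
  qed
  have s2: "(\<Oplus>l\<in>{k..<n}. Rfun k ys ws a l \<otimes> Ufun k ys l b) = ?T"
    using a b by (intro finsum_cong) (auto simp: Ufun_def Rfun_def ws_car ys_car)
  have "(\<Oplus>l\<in>{..<n}. Rfun k ys ws a l \<otimes> Ufun k ys l b)
      = (\<Oplus>l\<in>{..<k}. Rfun k ys ws a l \<otimes> Ufun k ys l b) \<oplus> (\<Oplus>l\<in>{k..<n}. Rfun k ys ws a l \<otimes> Ufun k ys l b)"
    unfolding un using a b by (intro finsum_Un_disjoint) (auto simp: Rfun_car Ufun_car)
  also have "\<dots> = \<ominus> ?T \<oplus> ?T" using s1 s2 by simp
  also have "\<dots> = \<zero>" using Tc by (simp add: l_neg)
  finally show ?thesis .
qed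

lemma fam_sq: "mat_mult R n (fam k ys ws) (fam k ys ws) = (\<lambda>i j. \<zero>)"
proof (intro ext)
  fix i j
  show "mat_mult R n (fam k ys ws) (fam k ys ws) i j = \<zero>"
  proof (cases "i < n \<and> j < n")
    case True
    have "mat_mult R n (fam k ys ws) (fam k ys ws) i j
        = (\<Oplus>l\<in>{..<n}. (\<Oplus>a\<in>{..<k}. Ufun k ys i a \<otimes> Rfun k ys ws a l) \<otimes> (\<Oplus>b\<in>{..<k}. Ufun k ys l b \<otimes> Rfun k ys ws b j))"
      unfolding mat_mult_def fam_def using True
      by (simp, intro finsum_cong) (auto intro!: finsum_closed simp: Ufun_car Rfun_car)
    also have "\<dots> = \<zero>"
      by (rule sum_quad_zero) (auto simp: Ufun_car Rfun_car inner_zero)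
    finally show ?thesis .
  next
    case False
    then show ?thesis unfolding mat_mult_def by auto
  qed
qed

lemma fam_diff: "fam k ys ws \<in> differentials R n"
  unfolding differentials_def using fam_mats fam_sq by simp

lemma fam_top:
  assumes i: "i < k" and j: "j < n"
  shows "fam k ys ws i j = Rfun k ys ws i j"
proof -
  have pw: "\<And>a. a < k \<Longrightarrow> Ufun k ys i a \<otimes> Rfun k ys ws a j = (if i = a then Rfun k ys ws a j else \<zero>)"
    using i by (auto simp: Ufun_def Rfun_car)
  have "fam k ys ws i j = (\<Oplus>a\<in>{..<k}. if i = a then Rfun k ys ws a j else \<zero>)"
    unfolding fam_def using i j kn pw by (simp, intro finsum_cong) (auto simp: Rfun_car)
  also have "\<dots> = Rfun k ys ws i j" using i by (intro finsum_singleton) (auto simp: Rfun_car)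
  finally show ?thesis .
qed

lemma fam_low:
  assumes i: "k \<le> i" "i < n" and j: "k \<le> j" "j < n"
  shows "fam k ys ws i j = (\<Oplus>a\<in>{..<k}. (ys ! a) i \<otimes> (ws ! a) j)"
  unfolding fam_def using i j by (simp, intro finsum_cong) (auto simp: Ufun_def Rfun_def ys_car ws_car)

end


context ffield begin

lemma famctxI:
  assumes "k \<le> n" "length ys = k" "set ys \<subseteq> Uk k" "length ws = k" "set ws \<subseteq> Uk k"
  shows "famctx R n k ys ws"
  by (rule famctx.intro[OF ffield_axioms], rule famctx_axioms.intro) (use assms in auto)

lemma fam_inj:
  assumes A: "famctx R n k ys ws" and B: "famctx R n k ys' ws'"
    and ind: "lin_indep R n ws" and eq: "fam k ys ws = fam k ys' ws'"
  shows "ys = ys' \<and> ws = ws'"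
proof -
  interpret A: famctx R n k ys ws by (rule A)
  interpret B: famctx R n k ys' ws' by (rule B)
  have wseq: "ws = ws'"
  proof (rule nth_equalityI)
    show "length ws = length ws'" using A.ws B.ws by simp
    fix a assume "a < length ws"
    then have a: "a < k" using A.ws by simp
    show "ws ! a = ws' ! a"
    proof (rule ext)
      fix j
      show "(ws ! a) j = (ws' ! a) j"
      proof (cases "k \<le> j \<and> j < n")
        case True
        have "(ws ! a) j = Rfun k ys ws a j" using True by (simp add: Rfun_def)
        also have "\<dots> = fam k ys ws a j" using A.fam_top[OF a] True by simp
        also have "\<dots> = fam k ys' ws' a j" using eq by simp
        also have "\<dots> = Rfun k ys' ws' a j" using B.fam_top[OF a] True by simp
        also have "\<dots> = (ws' ! a) j" using True by (simp add: Rfun_def)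
        finally show ?thesis .
      next
        case False
        then have "j < k \<or> \<not> j < n" by auto
        then show ?thesis
        proof
          assume "j < k" then show ?thesis using Uk_low[OF A.ws_Uk[OF a]] Uk_low[OF B.ws_Uk[OF a]] by simp
        next
          assume "\<not> j < n" then show ?thesis
            using vecsD(2)[OF Uk_vecs[OF A.ws_Uk[OF a]]] vecsD(2)[OF Uk_vecs[OF B.ws_Uk[OF a]]] by simp
        qed
      qed
    qed
  qed
  have wsv: "set ws \<subseteq> vecs R n" using A.ws(2) by (auto simp: Uk_def)
  have yseq: "ys = ys'"
  proof (rule nth_equalityI)
    show "length ys = length ys'" using A.ys B.ys by simp
    fix a assume "a < length ys"
    then have a: "a < k" using A.ys by simp
    show "ys ! a = ys' ! a"
    proof (rule ext)
      fix i
      show "(ys ! a) i = (ys' ! a) i"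
      proof (cases "k \<le> i \<and> i < n")
        case True
        let ?c = "\<lambda>b. (ys ! b) i" and ?c' = "\<lambda>b. (ys' ! b) i"
        have cc: "\<And>b. b < length ws \<Longrightarrow> ?c b \<in> carrier R" using A.ys_car A.ws by simp
        have cc': "\<And>b. b < length ws \<Longrightarrow> ?c' b \<in> carrier R" using B.ys_car A.ws by simp
        have lc: "lincomb R ?c ws = lincomb R ?c' ws"
        proof (rule ext)
          fix j
          show "lincomb R ?c ws j = lincomb R ?c' ws j"
          proof (cases "k \<le> j \<and> j < n")
            case True2: True
            have "lincomb R ?c ws j = fam k ys ws i j"
              using A.fam_low[of i j] True True2 A.ws by (simp add: lincomb_def)
            also have "\<dots> = fam k ys' ws' i j" using eq by simp
            also have "\<dots> = lincomb R ?c' ws j"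
              using B.fam_low[of i j] True True2 A.ws wseq by (simp add: lincomb_def)
            finally show ?thesis .
          next
            case False2: False
            have z: "\<And>b. b < k \<Longrightarrow> (ws ! b) j = \<zero>"
            proof -
              fix b assume b: "b < k"
              show "(ws ! b) j = \<zero>"
              proof (cases "j < k")
                case True then show ?thesis using Uk_low[OF A.ws_Uk[OF b]] by simp
              next
                case False then have "\<not> j < n" using False2 by simp
                then show ?thesis using vecsD(2)[OF Uk_vecs[OF A.ws_Uk[OF b]]] by simp
              qed
            qed
            have "lincomb R ?c ws j = (\<Oplus>b\<in>{..<k}. \<zero>)"
              unfolding lincomb_def using A.ws z A.ys_car by (intro finsum_cong) auto
            moreover have "lincomb R ?c' ws j = (\<Oplus>b\<in>{..<k}. \<zero>)"
              unfolding lincomb_def using A.ws z B.ys_car by (intro finsum_cong) auto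
            ultimately show ?thesis by simp
          qed
        qed
        show ?thesis using lincomb_inj[OF ind wsv cc cc' lc] a A.ws by simp
      next
        case False
        then have "i < k \<or> \<not> i < n" by auto
        then show ?thesis
        proof
          assume "i < k" then show ?thesis using Uk_low[OF A.ys_Uk[OF a]] Uk_low[OF B.ys_Uk[OF a]] by simp
        next
          assume "\<not> i < n" then show ?thesis
            using vecsD(2)[OF Uk_vecs[OF A.ys_Uk[OF a]]] vecsD(2)[OF Uk_vecs[OF B.ys_Uk[OF a]]] by simp
        qed
      qed
    qed
  qed
  show ?thesis using wseq yseq by simp
qed

lemma D_lower:
  assumes k: "2 * k \<le> n"
  shows "real q ^ ((n - k) * k) * (real q ^ (n - k) / 2) ^ k \<le> real (card (differentials R n))"
proof -
  let ?A = "{ys. set ys \<subseteq> Uk k \<and> length ys = k}"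
  let ?B = "ILs (Uk k) k"
  let ?P = "?A \<times> ?B"
  let ?g = "\<lambda>(ys, ws). fam k ys ws"
  have fU: "finite (Uk k)" and cU: "card (Uk k) = q ^ (n - k)" using Uk_card by auto
  have Uv: "Uk k \<subseteq> vecs R n" by (auto simp: Uk_def)
  have ctx: "famctx R n k ys ws" if "(ys, ws) \<in> ?P" for ys ws
    using that k by (intro famctxI) (auto simp: ILs_def)
  have sub: "?g ` ?P \<subseteq> differentials R n"
  proof
    fix M assume "M \<in> ?g ` ?P"
    then obtain ys ws where p: "(ys, ws) \<in> ?P" and M: "M = fam k ys ws" by auto
    show "M \<in> differentials R n" using famctx.fam_diff[OF ctx[OF p]] M by simp
  qed
  have inj: "inj_on ?g ?P"
  proof (rule inj_onI)
    fix x y assume x: "x \<in> ?P" and y: "y \<in> ?P" and e: "?g x = ?g y"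
    obtain ys ws where xx: "x = (ys, ws)" by (cases x)
    obtain ys' ws' where yy: "y = (ys', ws')" by (cases y)
    have ind: "lin_indep R n ws" using x xx by (simp add: ILs_def)
    have px: "(ys, ws) \<in> ?P" using x xx by simp
    have py: "(ys', ws') \<in> ?P" using y yy by simp
    have "fam k ys ws = fam k ys' ws'" using e xx yy by simp
    then show "x = y" using fam_inj[OF ctx[OF px] ctx[OF py] ind] xx yy by simp
  qed
  have cA: "card ?A = q ^ ((n - k) * k)"
    using card_lists_length_eq[OF fU] cU by (simp add: power_mult)
  have cB: "real (card ?B) \<ge> (real q ^ (n - k) / 2) ^ k"
    using ILs_card_ge2[OF Uk_subsp cU] k by simp
  have fP: "finite ?P" using finite_lists_length_eq[OF fU] ILs_finite[OF Uv] by simp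
  have "real q ^ ((n - k) * k) * (real q ^ (n - k) / 2) ^ k \<le> real (card ?A) * real (card ?B)"
    using cA cB by (simp add: mult_left_mono)
  also have "\<dots> = real (card ?P)" by (simp add: card_cartesian_product)
  also have "\<dots> = real (card (?g ` ?P))" using inj by (simp add: card_image)
  also have "\<dots> \<le> real (card (differentials R n))" using card_mono[OF diff_finite sub] by simp
  finally show ?thesis .
qed

end


lemma exp_gap:
  fixes m k n :: nat
  assumes mk: "m < k" and kn: "2 * k \<le> n"
  shows "2 * m * (n - m) < 2 * k * (n - k)"
proof -
  obtain d where d: "k = m + Suc d" using less_imp_Suc_add[OF mk] by auto
  obtain a where a: "n = k + a" using kn by (metis add_leD2 le_add_diff_inverse mult_2)
  have ka: "k \<le> a" using a kn by simp
  have ma: "m < a" using mk ka by simp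
  have nm: "n - m = Suc d + a" using a d by simp
  have nk: "n - k = a" using a by simp
  have "Suc d * m < Suc d * a" by (rule mult_strict_left_mono) (use ma in auto)
  then have "m * Suc d + m * a < m * a + Suc d * a" by (simp add: mult.commute)
  then have "m * (Suc d + a) < (m + Suc d) * a" by (simp add: algebra_simps)
  then have "m * (n - m) < k * (n - k)" using nm nk d by simp
  then show ?thesis by simp
qed

context ffield begin

lemma main_bound:
  shows "\<bar>prob_hom R n (n - 2 * (n div 2)) - 1\<bar> \<le> real (n div 2) * 4 ^ (n div 2) / real q"
    and "r \<noteq> n - 2 * (n div 2) \<Longrightarrow> \<bar>prob_hom R n r\<bar> \<le> real (n div 2) * 4 ^ (n div 2) / real q"
proof -
  define k where "k = n div 2"
  define C where "C = real k * 4 ^ k"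
  define e where "e = 2 * k * (n - k)"
  let ?D = "differentials R n"
  let ?Bad = "{M \<in> ?D. rk M \<noteq> k}"
  have kn: "2 * k \<le> n" unfolding k_def by simp
  have finD: "finite ?D" by (rule diff_finite)
  have Dpos: "real (card ?D) > 0" using diff_nonempty by simp
  have q2: "real q \<ge> 2" using q_ge2 by simp
  have qpos: "real q > 0" using q2 by simp
  have homeq: "homology_dim R n M = n - 2 * k \<longleftrightarrow> rk M = k" if M: "M \<in> ?D" for M
    using diff_dims(2,3)[OF M] kn by auto
  have badsub: "?Bad \<subseteq> (\<Union>m\<in>{..<k}. {M \<in> ?D. rk M = m})"
  proof
    fix M assume M: "M \<in> ?Bad"
    have "2 * rk M \<le> n" using diff_dims(3) M by simp
    then have "rk M \<le> k" unfolding k_def by linarith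
    then have "rk M < k" using M by simp
    then show "M \<in> (\<Union>m\<in>{..<k}. {M \<in> ?D. rk M = m})" using M by blast
  qed
  have cBad: "real (card ?Bad) \<le> real k * 2 ^ k * real q ^ (e - 1)"
  proof -
    have "card ?Bad \<le> card (\<Union>m\<in>{..<k}. {M \<in> ?D. rk M = m})"
      using badsub finD by (intro card_mono) auto
    also have "\<dots> \<le> (\<Sum>m\<in>{..<k}. card {M \<in> ?D. rk M = m})" by (rule card_UN_le) simp
    finally have "real (card ?Bad) \<le> real (\<Sum>m\<in>{..<k}. card {M \<in> ?D. rk M = m})"
      by (simp only: of_nat_le_iff)
    also have "\<dots> = (\<Sum>m\<in>{..<k}. real (card {M \<in> ?D. rk M = m}))" by (rule of_nat_sum)
    also have "\<dots> \<le> (\<Sum>m\<in>{..<k}. 2 ^ k * real q ^ (e - 1))"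
    proof (rule sum_mono)
      fix m assume "m \<in> {..<k}"
      then have m: "m < k" by simp
      have "real (card {M \<in> ?D. rk M = m}) \<le> 2 ^ m * real q ^ (2 * m * (n - m))"
        using m kn by (intro Dm_bound) simp
      also have "\<dots> \<le> 2 ^ k * real q ^ (e - 1)"
      proof (rule mult_mono)
        show "(2::real) ^ m \<le> 2 ^ k" using m by (intro power_increasing) auto
        have "2 * m * (n - m) \<le> e - 1" using exp_gap[OF m kn] unfolding e_def by simp
        then show "real q ^ (2 * m * (n - m)) \<le> real q ^ (e - 1)" using q2 by (intro power_increasing) auto
      qed auto
      finally show "real (card {M \<in> ?D. rk M = m}) \<le> 2 ^ k * real q ^ (e - 1)" .
    qed
    also have "\<dots> = real k * 2 ^ k * real q ^ (e - 1)" by simp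
    finally show ?thesis .
  qed
  have low: "real q ^ e \<le> 2 ^ k * real (card ?D)"
  proof -
    have "real q ^ ((n - k) * k) * (real q ^ (n - k) / 2) ^ k \<le> real (card ?D)" by (rule D_lower[OF kn])
    moreover have "real q ^ ((n - k) * k) * (real q ^ (n - k) / 2) ^ k = real q ^ e / 2 ^ k"
    proof -
      have ex: "(n - k) * k + (n - k) * k = e" unfolding e_def by simp
      have "(real q ^ (n - k) / 2) ^ k = real q ^ ((n - k) * k) / 2 ^ k" by (simp add: power_divide power_mult)
      moreover have "real q ^ ((n - k) * k) * real q ^ ((n - k) * k) = real q ^ e"
        using ex by (metis power_add)
      ultimately show ?thesis by simp
    qed
    ultimately show ?thesis by (simp add: field_simps)
  qed
  have ratio: "real (card ?Bad) * real q \<le> C * real (card ?D)"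
  proof (cases "k = 0")
    case True
    have e0: "?Bad = {}" using badsub True by auto
    have "card ?Bad = 0" by (simp only: e0 card.empty)
    then show ?thesis unfolding C_def using True Dpos by simp
  next
    case False
    then have e1: "e \<ge> 1" unfolding e_def using kn by simp
    have "real (card ?Bad) * real q \<le> real k * 2 ^ k * real q ^ (e - 1) * real q"
      using cBad qpos by (intro mult_right_mono) auto
    also have "\<dots> = real k * 2 ^ k * real q ^ e"
      using e1 by (simp add: power_eq_if[of _ e] mult.commute mult.left_commute)
    also have "\<dots> \<le> real k * 2 ^ k * (2 ^ k * real (card ?D))"
      using low by (intro mult_left_mono) auto
    also have "\<dots> = C * real (card ?D)" unfolding C_def by (simp add: power_mult_distrib[symmetric])
    finally show ?thesis .
  qed
  have bound: "real (card ?Bad) / real (card ?D) \<le> C / real q"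
    using ratio Dpos qpos by (simp add: field_simps)
  have good: "{M \<in> ?D. homology_dim R n M = n - 2 * k} = ?D - ?Bad" using homeq by auto
  have "prob_hom R n (n - 2 * k) = real (card (?D - ?Bad)) / real (card ?D)"
    unfolding prob_hom_def good by simp
  also have "\<dots> = (real (card ?D) - real (card ?Bad)) / real (card ?D)"
    using finD by (subst card_Diff_subset) (auto simp: of_nat_diff card_mono)
  also have "\<dots> = 1 - real (card ?Bad) / real (card ?D)" using Dpos by (simp add: field_simps)
  finally have pg: "prob_hom R n (n - 2 * k) = 1 - real (card ?Bad) / real (card ?D)" .
  show "\<bar>prob_hom R n (n - 2 * (n div 2)) - 1\<bar> \<le> real (n div 2) * 4 ^ (n div 2) / real q"
    using pg bound Dpos unfolding k_def[symmetric] C_def[symmetric] by simp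
  assume r: "r \<noteq> n - 2 * (n div 2)"
  have sub: "{M \<in> ?D. homology_dim R n M = r} \<subseteq> ?Bad" using homeq r unfolding k_def by auto
  have "prob_hom R n r \<le> real (card ?Bad) / real (card ?D)"
    unfolding prob_hom_def using card_mono[OF _ sub] finD Dpos by (intro divide_right_mono) auto
  moreover have "prob_hom R n r \<ge> 0" unfolding prob_hom_def by simp
  ultimately show "\<bar>prob_hom R n r\<bar> \<le> real (n div 2) * 4 ^ (n div 2) / real q"
    using bound unfolding k_def[symmetric] C_def[symmetric] by simp
qed

end


theorem theorem1:
  fixes n :: nat
  assumes "n > 0"
  shows "(\<forall>r::nat. r > 1 \<and> r mod 2 = n mod 2 \<longrightarrow>
            (\<forall>\<epsilon>>0. \<exists>Q::nat. \<forall>R :: 'a ring. field R \<and> finite (carrier R) \<and> card (carrier R) \<ge> Q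
               \<longrightarrow> \<bar>prob_hom R n r - 0\<bar> < \<epsilon>))
       \<and> (even n \<longrightarrow> (\<forall>\<epsilon>>0. \<exists>Q::nat. \<forall>R :: 'a ring. field R \<and> finite (carrier R) \<and> card (carrier R) \<ge> Q
               \<longrightarrow> \<bar>prob_hom R n 0 - 1\<bar> < \<epsilon>))
       \<and> (odd n \<longrightarrow> (\<forall>\<epsilon>>0. \<exists>Q::nat. \<forall>R :: 'a ring. field R \<and> finite (carrier R) \<and> card (carrier R) \<ge> Q
               \<longrightarrow> \<bar>prob_hom R n 1 - 1\<bar> < \<epsilon>))"
proof -
  define C where "C = real (n div 2) * 4 ^ (n div 2)"
  have Cnn: "C \<ge> 0" unfolding C_def by simp
  have FF: "ffield R" if "field R" "finite (carrier R)" for R :: "'a ring"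
    by (rule ffield.intro[OF that(1)], rule ffield_axioms.intro[OF that(2)])
  have A: "\<bar>prob_hom R n r\<bar> \<le> C / real (card (carrier R))"
    if "field R" "finite (carrier R)" "r \<noteq> n - 2 * (n div 2)" for R :: "'a ring" and r
    using ffield.main_bound(2)[OF FF[OF that(1,2)], where n=n and r=r] that(3) unfolding C_def by simp
  have B: "\<bar>prob_hom R n (n - 2 * (n div 2)) - 1\<bar> \<le> C / real (card (carrier R))"
    if "field R" "finite (carrier R)" for R :: "'a ring"
    using ffield.main_bound(1)[OF FF[OF that(1,2)], where n=n] unfolding C_def by simp
  have qpos: "real (card (carrier R)) > 0" if "field R" "finite (carrier R)" for R :: "'a ring"
    using ffield.q_ge2[OF FF[OF that]] by simp
  have conv: "\<exists>Q::nat. \<forall>R :: 'a ring. field R \<and> finite (carrier R) \<and> card (carrier R) \<ge> Q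
               \<longrightarrow> C / real (card (carrier R)) < \<epsilon>" if e: "\<epsilon> > 0" for \<epsilon> :: real
  proof (intro exI allI impI)
    fix R :: "'a ring"
    assume R: "field R \<and> finite (carrier R) \<and> card (carrier R) \<ge> nat \<lceil>C / \<epsilon>\<rceil> + 1"
    let ?q = "real (card (carrier R))"
    have qp: "?q > 0" using qpos R by simp
    have "real (nat \<lceil>C / \<epsilon>\<rceil> + 1) \<le> ?q" using R by (simp only: of_nat_le_iff)
    moreover have "C / \<epsilon> \<le> real (nat \<lceil>C / \<epsilon>\<rceil>)" by linarith
    ultimately have "C / \<epsilon> < ?q" by simp
    then have "C < \<epsilon> * ?q" using e by (simp add: field_simps)
    then show "C / ?q < \<epsilon>" using qp by (simp add: field_simps)
  qed
  have md: "n - 2 * (n div 2) = n mod 2" by (simp add: minus_mult_div_eq_mod)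
  show ?thesis
  proof (intro conjI allI impI)
    fix r :: nat and \<epsilon> :: real
    assume r: "1 < r \<and> r mod 2 = n mod 2" and e: "0 < \<epsilon>"
    have rne: "r \<noteq> n - 2 * (n div 2)" using r md by auto
    obtain Q where Q: "\<forall>R :: 'a ring. field R \<and> finite (carrier R) \<and> card (carrier R) \<ge> Q
               \<longrightarrow> C / real (card (carrier R)) < \<epsilon>" using conv[OF e] by blast
    show "\<exists>Q::nat. \<forall>R :: 'a ring. field R \<and> finite (carrier R) \<and> card (carrier R) \<ge> Q
               \<longrightarrow> \<bar>prob_hom R n r - 0\<bar> < \<epsilon>"
    proof (intro exI allI impI)
      fix R :: "'a ring" assume R: "field R \<and> finite (carrier R) \<and> card (carrier R) \<ge> Q"
      show "\<bar>prob_hom R n r - 0\<bar> < \<epsilon>" using A[of R r] R rne Q by fastforce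
    qed
  next
    fix \<epsilon> :: real
    assume ev: "even n" and e: "0 < \<epsilon>"
    have z: "n - 2 * (n div 2) = 0" using ev md by simp
    obtain Q where Q: "\<forall>R :: 'a ring. field R \<and> finite (carrier R) \<and> card (carrier R) \<ge> Q
               \<longrightarrow> C / real (card (carrier R)) < \<epsilon>" using conv[OF e] by blast
    show "\<exists>Q::nat. \<forall>R :: 'a ring. field R \<and> finite (carrier R) \<and> card (carrier R) \<ge> Q
               \<longrightarrow> \<bar>prob_hom R n 0 - 1\<bar> < \<epsilon>"
    proof (intro exI allI impI)
      fix R :: "'a ring" assume R: "field R \<and> finite (carrier R) \<and> card (carrier R) \<ge> Q"
      show "\<bar>prob_hom R n 0 - 1\<bar> < \<epsilon>" using B[of R] R Q z by fastforce
    qed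
  next
    fix \<epsilon> :: real
    assume od: "odd n" and e: "0 < \<epsilon>"
    have z: "n - 2 * (n div 2) = 1" using od md by (simp add: odd_iff_mod_2_eq_one)
    obtain Q where Q: "\<forall>R :: 'a ring. field R \<and> finite (carrier R) \<and> card (carrier R) \<ge> Q
               \<longrightarrow> C / real (card (carrier R)) < \<epsilon>" using conv[OF e] by blast
    show "\<exists>Q::nat. \<forall>R :: 'a ring. field R \<and> finite (carrier R) \<and> card (carrier R) \<ge> Q
               \<longrightarrow> \<bar>prob_hom R n 1 - 1\<bar> < \<epsilon>"
    proof (intro exI allI impI)
      fix R :: "'a ring" assume R: "field R \<and> finite (carrier R) \<and> card (carrier R) \<ge> Q"
      show "\<bar>prob_hom R n 1 - 1\<bar> < \<epsilon>" using B[of R] R Q z by fastforce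
    qed
  qed
qed


end
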